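(* Let $(A,\sigma)$ be a lax central bialgebra of a monoidal category $\mathcal C$ and $A\otimes_\sigma ?$ the associated bimonad on $\mathcal C$. Then: (a) $A\otimes_\sigma ?$ is a left Hopf monad $\iff$ it is a left pre-Hopf monad $\iff$ $A$ admits an antipode; (b) $A\otimes_\sigma ?$ is a right Hopf monad $\iff$ it is a right pre-Hopf monad $\iff$ $\sigma$ is invertible and $A$ admits an opantipode. In particular $A\otimes_\sigma ?$ is a Hopf monad iff it is a pre-Hopf monad iff $(A,\sigma)$ is a Hopf algebra in the center $\mathcal Z(\mathcal C)$.
   Context: Monoidal categories are strict. A lax half-braiding for an object $M$ of $\mathcal C$ is a natural transformation $\sigma_X\colon M\otimes X\to X\otimes M$ with $\sigma_{Y\otimes Z}=(Y\otimes\sigma_Z)(\sigma_Y\otimes Z)$ and $\sigma_{\mathbb 1}=\mathrm{id}_M$. The lax center $\mathcal Z_{lax}(\mathcal C)$ has objects such pairs $(M,\sigma)$, morphisms $f\colon M\to M'$ with $(X\otimes f)\sigma_X=\sigma'_X(f\otimes X)$, product $(M,\sigma)\otimes(N,\gamma)=(M\otimes N,(\sigma\otimes N)(M\otimes\gamma))$, and lax braiding $\tau_{(M,\sigma),(N,\gamma)}=\sigma_N$; the center $\mathcal Z(\mathcal C)$ is the full subcategory where $\sigma$ is invertible (a braided category). A bialgebra in a lax braided category with lax braiding $\tau$ is an object $A$ with algebra $(m,u)$ and coalgebra $(\Delta,\varepsilon)$ structures such that $\Delta m=(m\otimes m)(A\otimes\tau_{A,A}\otimes A)(\Delta\otimes\Delta)$,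 $\Delta u=u\otimes u$, $\varepsilon m=\varepsilon\otimes\varepsilon$, $\varepsilon u=\mathrm{id}_{\mathbb 1}$. An antipode is $S\colon A\to A$ with $m(S\otimes A)\Delta=u\varepsilon=m(A\otimes S)\Delta$; if $\tau_{A,A}$ is invertible, an opantipode is $S'$ with $m\tau_{A,A}^{-1}(S'\otimes A)\Delta=u\varepsilon=m\tau_{A,A}^{-1}(A\otimes S')\Delta$. A Hopf algebra is a bialgebra with invertible antipode and $\tau_{A,A}$ invertible. A lax central bialgebra of $\mathcal C$ is a bialgebra in $\mathcal Z_{lax}(\mathcal C)$; a central Hopf algebra is a Hopf algebra in $\mathcal Z(\mathcal C)$. For a lax central bialgebra $(A,\sigma)$, the bimonad $A\otimes_\sigma ?$ is the functor $X\mapsto A\otimes X$ with $\mu_X=m\otimes X$, $\eta_X=u\otimes X$, $T_2(X,Y)=((A\otimes\sigma_X)(\Delta\otimes X))\otimes Y$, $T_0=\varepsilon$. Bimonad: monad with comonoidal structure $(T_2,T_0)$ making $\mu,\eta$ comonoidal; fusion operators $H^l_{X,Y}=(TX\otimes\mu_Y)T_2(X,TY)$, $H^r_{X,Y}=(\mu_X\otimes TY)T_2(TX,Y)$; left (resp. right) Hopf if $H^l$ (resp. $H^r$) invertible; left (resp. right) pre-Hopf if $H^l_{\mathbb 1,X}$ (resp. $H^r_{X,\mathbb 1}$) invertible for all $X$. *)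

theory Defs
  imports Main
begin

record ('o, 'm) smc =
  Obj  :: "'o set"
  Hom  :: "'o \<Rightarrow> 'o \<Rightarrow> 'm set"
  cmp  :: "'m \<Rightarrow> 'm \<Rightarrow> 'm"      \<comment> \<open>cmp g f = g o f (first f, then g)\<close>
  idm  :: "'o \<Rightarrow> 'm"
  tobj :: "'o \<Rightarrow> 'o \<Rightarrow> 'o"
  tarr :: "'m \<Rightarrow> 'm \<Rightarrow> 'm"
  uobj :: "'o"

definition strict_monoidal_cat :: "('o, 'm, 'x) smc_scheme \<Rightarrow> bool" where
  "strict_monoidal_cat C \<longleftrightarrow>
     (\<forall>a\<in>Obj C. idm C a \<in> Hom C a a)
   \<and> (\<forall>a\<in>Obj C. \<forall>b\<in>Obj C. \<forall>c\<in>Obj C. \<forall>f g.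
        f \<in> Hom C a b \<and> g \<in> Hom C b c \<longrightarrow> cmp C g f \<in> Hom C a c)
   \<and> (\<forall>a\<in>Obj C. \<forall>b\<in>Obj C. \<forall>f. f \<in> Hom C a b \<longrightarrow>
        cmp C f (idm C a) = f \<and> cmp C (idm C b) f = f)
   \<and> (\<forall>a\<in>Obj C. \<forall>b\<in>Obj C. \<forall>c\<in>Obj C. \<forall>d\<in>Obj C. \<forall>f g h.
        f \<in> Hom C a b \<and> g \<in> Hom C b c \<and> h \<in> Hom C c d \<longrightarrow>
        cmp C h (cmp C g f) = cmp C (cmp C h g) f)
   \<and> uobj C \<in> Obj C
   \<and> (\<forall>a\<in>Obj C. \<forall>b\<in>Obj C. tobj C a b \<in> Obj C)
   \<and> (\<forall>a\<in>Obj C. \<forall>b\<in>Obj C. \<forall>c\<in>Obj C. \<forall>d\<in>Obj C. \<forall>f g.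
        f \<in> Hom C a b \<and> g \<in> Hom C c d \<longrightarrow> tarr C f g \<in> Hom C (tobj C a c) (tobj C b d))
   \<and> (\<forall>a\<in>Obj C. \<forall>b\<in>Obj C. tarr C (idm C a) (idm C b) = idm C (tobj C a b))
   \<and> (\<forall>a\<in>Obj C. \<forall>b\<in>Obj C. \<forall>c\<in>Obj C. \<forall>d\<in>Obj C. \<forall>e\<in>Obj C. \<forall>k\<in>Obj C. \<forall>f f' g g'.
        f \<in> Hom C a b \<and> f' \<in> Hom C b c \<and> g \<in> Hom C d e \<and> g' \<in> Hom C e k \<longrightarrow>
        tarr C (cmp C f' f) (cmp C g' g) = cmp C (tarr C f' g') (tarr C f g))
   \<and> (\<forall>a\<in>Obj C. \<forall>b\<in>Obj C. \<forall>c\<in>Obj C. tobj C a (tobj C b c) = tobj C (tobj C a b) c)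
   \<and> (\<forall>a\<in>Obj C. tobj C (uobj C) a = a \<and> tobj C a (uobj C) = a)
   \<and> (\<forall>a\<in>Obj C. \<forall>b\<in>Obj C. \<forall>c\<in>Obj C. \<forall>d\<in>Obj C. \<forall>e\<in>Obj C. \<forall>k\<in>Obj C. \<forall>f g h.
        f \<in> Hom C a b \<and> g \<in> Hom C c d \<and> h \<in> Hom C e k \<longrightarrow>
        tarr C f (tarr C g h) = tarr C (tarr C f g) h)
   \<and> (\<forall>a\<in>Obj C. \<forall>b\<in>Obj C. \<forall>f. f \<in> Hom C a b \<longrightarrow>
        tarr C (idm C (uobj C)) f = f \<and> tarr C f (idm C (uobj C)) = f)"

definition iso :: "('o, 'm, 'x) smc_scheme \<Rightarrow> 'm \<Rightarrow> 'o \<Rightarrow> 'o \<Rightarrow> bool" where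
  "iso C f a b \<longleftrightarrow> f \<in> Hom C a b \<and>
     (\<exists>g\<in>Hom C b a. cmp C g f = idm C a \<and> cmp C f g = idm C b)"

definition inverse_of :: "('o, 'm, 'x) smc_scheme \<Rightarrow> 'm \<Rightarrow> 'm \<Rightarrow> 'o \<Rightarrow> 'o \<Rightarrow> bool" where
  "inverse_of C f g a b \<longleftrightarrow> f \<in> Hom C a b \<and> g \<in> Hom C b a \<and>
     cmp C g f = idm C a \<and> cmp C f g = idm C b"

definition lax_half_braiding :: "('o, 'm, 'x) smc_scheme \<Rightarrow> 'o \<Rightarrow> ('o \<Rightarrow> 'm) \<Rightarrow> bool" where
  "lax_half_braiding C M s \<longleftrightarrow> M \<in> Obj C
   \<and> (\<forall>X\<in>Obj C. s X \<in> Hom C (tobj C M X) (tobj C X M))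
   \<and> (\<forall>X\<in>Obj C. \<forall>Y\<in>Obj C. \<forall>f. f \<in> Hom C X Y \<longrightarrow>
        cmp C (tarr C f (idm C M)) (s X) = cmp C (s Y) (tarr C (idm C M) f))
   \<and> (\<forall>Y\<in>Obj C. \<forall>Z\<in>Obj C.
        s (tobj C Y Z) = cmp C (tarr C (idm C Y) (s Z)) (tarr C (s Y) (idm C Z)))
   \<and> s (uobj C) = idm C M"

text \<open>Half-braiding of the tensor product (M,s) (x) (N,g) in the lax center.\<close>
definition zt_hb :: "('o, 'm, 'x) smc_scheme \<Rightarrow> 'o \<Rightarrow> ('o \<Rightarrow> 'm) \<Rightarrow> 'o \<Rightarrow> ('o \<Rightarrow> 'm) \<Rightarrow> 'o \<Rightarrow> 'm" where
  "zt_hb C M s N g X = cmp C (tarr C (s X) (idm C N)) (tarr C (idm C M) (g X))"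

text \<open>Half-braiding of the unit object of the lax center.\<close>
definition zu_hb :: "('o, 'm, 'x) smc_scheme \<Rightarrow> 'o \<Rightarrow> 'm" where
  "zu_hb C X = idm C X"

definition zlax_hom :: "('o, 'm, 'x) smc_scheme \<Rightarrow> 'o \<Rightarrow> ('o \<Rightarrow> 'm) \<Rightarrow> 'o \<Rightarrow> ('o \<Rightarrow> 'm) \<Rightarrow> 'm \<Rightarrow> bool" where
  "zlax_hom C M s N g f \<longleftrightarrow> f \<in> Hom C M N \<and>
     (\<forall>X\<in>Obj C. cmp C (tarr C (idm C X) f) (s X) = cmp C (g X) (tarr C f (idm C X)))"

text \<open>A bialgebra in the lax center; the lax braiding tau_{A,A} is s A.\<close>
definition lax_central_bialgebra :: "('o, 'm, 'x) smc_scheme \<Rightarrow> 'o \<Rightarrow> ('o \<Rightarrow> 'm)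
    \<Rightarrow> 'm \<Rightarrow> 'm \<Rightarrow> 'm \<Rightarrow> 'm \<Rightarrow> bool" where
  "lax_central_bialgebra C A s mu un cm cu \<longleftrightarrow>
     lax_half_braiding C A s
   \<and> zlax_hom C (tobj C A A) (zt_hb C A s A s) A s mu
   \<and> zlax_hom C (uobj C) (zu_hb C) A s un
   \<and> zlax_hom C A s (tobj C A A) (zt_hb C A s A s) cm
   \<and> zlax_hom C A s (uobj C) (zu_hb C) cu
   \<and> cmp C mu (tarr C mu (idm C A)) = cmp C mu (tarr C (idm C A) mu)
   \<and> cmp C mu (tarr C un (idm C A)) = idm C A
   \<and> cmp C mu (tarr C (idm C A) un) = idm C A
   \<and> cmp C (tarr C cm (idm C A)) cm = cmp C (tarr C (idm C A) cm) cm
   \<and> cmp C (tarr C cu (idm C A)) cm = idm C A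
   \<and> cmp C (tarr C (idm C A) cu) cm = idm C A
   \<and> cmp C cm mu = cmp C (tarr C mu mu)
        (cmp C (tarr C (tarr C (idm C A) (s A)) (idm C A)) (tarr C cm cm))
   \<and> cmp C cm un = tarr C un un
   \<and> cmp C cu mu = tarr C cu cu
   \<and> cmp C cu un = idm C (uobj C)"

definition is_antipode :: "('o, 'm, 'x) smc_scheme \<Rightarrow> 'o \<Rightarrow> ('o \<Rightarrow> 'm)
    \<Rightarrow> 'm \<Rightarrow> 'm \<Rightarrow> 'm \<Rightarrow> 'm \<Rightarrow> 'm \<Rightarrow> bool" where
  "is_antipode C A s mu un cm cu S \<longleftrightarrow> zlax_hom C A s A s S
   \<and> cmp C mu (cmp C (tarr C S (idm C A)) cm) = cmp C un cu
   \<and> cmp C mu (cmp C (tarr C (idm C A) S) cm) = cmp C un cu"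

definition has_antipode :: "('o, 'm, 'x) smc_scheme \<Rightarrow> 'o \<Rightarrow> ('o \<Rightarrow> 'm)
    \<Rightarrow> 'm \<Rightarrow> 'm \<Rightarrow> 'm \<Rightarrow> 'm \<Rightarrow> bool" where
  "has_antipode C A s mu un cm cu \<longleftrightarrow> (\<exists>S. is_antipode C A s mu un cm cu S)"

text \<open>Opantipode: requires tau_{A,A} = s A invertible; ti is its inverse.\<close>
definition is_opantipode :: "('o, 'm, 'x) smc_scheme \<Rightarrow> 'o \<Rightarrow> ('o \<Rightarrow> 'm)
    \<Rightarrow> 'm \<Rightarrow> 'm \<Rightarrow> 'm \<Rightarrow> 'm \<Rightarrow> 'm \<Rightarrow> bool" where
  "is_opantipode C A s mu un cm cu S' \<longleftrightarrow> zlax_hom C A s A s S'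
   \<and> (\<exists>ti. inverse_of C (s A) ti (tobj C A A) (tobj C A A)
        \<and> cmp C mu (cmp C ti (cmp C (tarr C S' (idm C A)) cm)) = cmp C un cu
        \<and> cmp C mu (cmp C ti (cmp C (tarr C (idm C A) S') cm)) = cmp C un cu)"

definition has_opantipode :: "('o, 'm, 'x) smc_scheme \<Rightarrow> 'o \<Rightarrow> ('o \<Rightarrow> 'm)
    \<Rightarrow> 'm \<Rightarrow> 'm \<Rightarrow> 'm \<Rightarrow> 'm \<Rightarrow> bool" where
  "has_opantipode C A s mu un cm cu \<longleftrightarrow> (\<exists>S'. is_opantipode C A s mu un cm cu S')"

definition invertible_hb :: "('o, 'm, 'x) smc_scheme \<Rightarrow> 'o \<Rightarrow> ('o \<Rightarrow> 'm) \<Rightarrow> bool" where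
  "invertible_hb C M s \<longleftrightarrow> (\<forall>X\<in>Obj C. iso C (s X) (tobj C M X) (tobj C X M))"

text \<open>Central Hopf algebra: Hopf algebra in the center Z(C), a full subcategory
  of the lax center closed under the monoidal structure.\<close>
definition central_hopf_algebra :: "('o, 'm, 'x) smc_scheme \<Rightarrow> 'o \<Rightarrow> ('o \<Rightarrow> 'm)
    \<Rightarrow> 'm \<Rightarrow> 'm \<Rightarrow> 'm \<Rightarrow> 'm \<Rightarrow> bool" where
  "central_hopf_algebra C A s mu un cm cu \<longleftrightarrow>
     lax_central_bialgebra C A s mu un cm cu
   \<and> invertible_hb C A s
   \<and> (\<exists>S. is_antipode C A s mu un cm cu S \<and> iso C S A A)
   \<and> iso C (s A) (tobj C A A) (tobj C A A)"

text \<open>Bimonad data: T on objects, multiplication mu_X, comonoidal T2(X,Y).\<close>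
definition fusion_l :: "('o, 'm, 'x) smc_scheme \<Rightarrow> ('o \<Rightarrow> 'o) \<Rightarrow> ('o \<Rightarrow> 'm)
    \<Rightarrow> ('o \<Rightarrow> 'o \<Rightarrow> 'm) \<Rightarrow> 'o \<Rightarrow> 'o \<Rightarrow> 'm" where
  "fusion_l C T mT T2 X Y = cmp C (tarr C (idm C (T X)) (mT Y)) (T2 X (T Y))"

definition fusion_r :: "('o, 'm, 'x) smc_scheme \<Rightarrow> ('o \<Rightarrow> 'o) \<Rightarrow> ('o \<Rightarrow> 'm)
    \<Rightarrow> ('o \<Rightarrow> 'o \<Rightarrow> 'm) \<Rightarrow> 'o \<Rightarrow> 'o \<Rightarrow> 'm" where
  "fusion_r C T mT T2 X Y = cmp C (tarr C (mT X) (idm C (T Y))) (T2 (T X) Y)"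

definition left_hopf :: "('o, 'm, 'x) smc_scheme \<Rightarrow> ('o \<Rightarrow> 'o) \<Rightarrow> ('o \<Rightarrow> 'm)
    \<Rightarrow> ('o \<Rightarrow> 'o \<Rightarrow> 'm) \<Rightarrow> bool" where
  "left_hopf C T mT T2 \<longleftrightarrow> (\<forall>X\<in>Obj C. \<forall>Y\<in>Obj C.
     iso C (fusion_l C T mT T2 X Y) (T (tobj C X (T Y))) (tobj C (T X) (T Y)))"

definition right_hopf :: "('o, 'm, 'x) smc_scheme \<Rightarrow> ('o \<Rightarrow> 'o) \<Rightarrow> ('o \<Rightarrow> 'm)
    \<Rightarrow> ('o \<Rightarrow> 'o \<Rightarrow> 'm) \<Rightarrow> bool" where
  "right_hopf C T mT T2 \<longleftrightarrow> (\<forall>X\<in>Obj C. \<forall>Y\<in>Obj C.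
     iso C (fusion_r C T mT T2 X Y) (T (tobj C (T X) Y)) (tobj C (T X) (T Y)))"

definition left_prehopf :: "('o, 'm, 'x) smc_scheme \<Rightarrow> ('o \<Rightarrow> 'o) \<Rightarrow> ('o \<Rightarrow> 'm)
    \<Rightarrow> ('o \<Rightarrow> 'o \<Rightarrow> 'm) \<Rightarrow> bool" where
  "left_prehopf C T mT T2 \<longleftrightarrow> (\<forall>X\<in>Obj C.
     iso C (fusion_l C T mT T2 (uobj C) X) (T (tobj C (uobj C) (T X))) (tobj C (T (uobj C)) (T X)))"

definition right_prehopf :: "('o, 'm, 'x) smc_scheme \<Rightarrow> ('o \<Rightarrow> 'o) \<Rightarrow> ('o \<Rightarrow> 'm)
    \<Rightarrow> ('o \<Rightarrow> 'o \<Rightarrow> 'm) \<Rightarrow> bool" where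
  "right_prehopf C T mT T2 \<longleftrightarrow> (\<forall>X\<in>Obj C.
     iso C (fusion_r C T mT T2 X (uobj C)) (T (tobj C (T X) (uobj C))) (tobj C (T X) (T (uobj C))))"

definition hopf_monad :: "('o, 'm, 'x) smc_scheme \<Rightarrow> ('o \<Rightarrow> 'o) \<Rightarrow> ('o \<Rightarrow> 'm)
    \<Rightarrow> ('o \<Rightarrow> 'o \<Rightarrow> 'm) \<Rightarrow> bool" where
  "hopf_monad C T mT T2 \<longleftrightarrow> left_hopf C T mT T2 \<and> right_hopf C T mT T2"

definition prehopf_monad :: "('o, 'm, 'x) smc_scheme \<Rightarrow> ('o \<Rightarrow> 'o) \<Rightarrow> ('o \<Rightarrow> 'm)
    \<Rightarrow> ('o \<Rightarrow> 'o \<Rightarrow> 'm) \<Rightarrow> bool" where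
  "prehopf_monad C T mT T2 \<longleftrightarrow> left_prehopf C T mT T2 \<and> right_prehopf C T mT T2"

definition bm_T :: "('o, 'm, 'x) smc_scheme \<Rightarrow> 'o \<Rightarrow> 'o \<Rightarrow> 'o" where
  "bm_T C A X = tobj C A X"

definition bm_mu :: "('o, 'm, 'x) smc_scheme \<Rightarrow> 'm \<Rightarrow> 'o \<Rightarrow> 'm" where
  "bm_mu C mu X = tarr C mu (idm C X)"

definition bm_eta :: "('o, 'm, 'x) smc_scheme \<Rightarrow> 'm \<Rightarrow> 'o \<Rightarrow> 'm" where
  "bm_eta C un X = tarr C un (idm C X)"

definition bm_T2 :: "('o, 'm, 'x) smc_scheme \<Rightarrow> 'o \<Rightarrow> ('o \<Rightarrow> 'm) \<Rightarrow> 'm \<Rightarrow> 'o \<Rightarrow> 'o \<Rightarrow> 'm" where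
  "bm_T2 C A s cm X Y =
     tarr C (cmp C (tarr C (idm C A) (s X)) (tarr C cm (idm C X))) (idm C Y)"

definition bm_T0 :: "'m \<Rightarrow> 'm" where
  "bm_T0 cu = cu"

end

theory Submission
  imports Defs
begin


type_synonym ('o,'m) ar = "('o \<times> 'm \<times> 'o) option"

definition dm :: "('o,'m) ar \<Rightarrow> 'o" where "dm f = fst (the f)"
definition cd :: "('o,'m) ar \<Rightarrow> 'o" where "cd f = snd (snd (the f))"
definition mr :: "('o,'m) ar \<Rightarrow> 'm" where "mr f = fst (snd (the f))"

lemma dm_tr[simp]: "dm (Some (a,f,b)) = a" and cd_tr[simp]: "cd (Some (a,f,b)) = b" and mr_tr[simp]: "mr (Some (a,f,b)) = f"
  by (simp_all add: dm_def cd_def mr_def)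

locale smcl =
  fixes C :: "('o,'m) smc"
  assumes SMC: "strict_monoidal_cat C"
begin

lemmas sp = SMC[unfolded strict_monoidal_cat_def]

abbreviation "Ob \<equiv> Obj C"
abbreviation "I \<equiv> uobj C"
abbreviation tob (infixr "\<otimes>" 80) where "a \<otimes> b \<equiv> tobj C a b"

lemma id_hom: "a \<in> Ob \<Longrightarrow> idm C a \<in> Hom C a a" using conjunct1[OF sp] by blast
lemma cmp_hom: "a \<in> Ob \<Longrightarrow> b \<in> Ob \<Longrightarrow> c \<in> Ob \<Longrightarrow> f \<in> Hom C a b \<Longrightarrow> g \<in> Hom C b c \<Longrightarrow> cmp C g f \<in> Hom C a c"
  using conjunct1[OF conjunct2[OF sp]] by blast
lemma cmp_idr: "a \<in> Ob \<Longrightarrow> b \<in> Ob \<Longrightarrow> f \<in> Hom C a b \<Longrightarrow> cmp C f (idm C a) = f"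
  using conjunct1[OF conjunct2[OF conjunct2[OF sp]]] by blast
lemma cmp_idl: "a \<in> Ob \<Longrightarrow> b \<in> Ob \<Longrightarrow> f \<in> Hom C a b \<Longrightarrow> cmp C (idm C b) f = f"
  using conjunct1[OF conjunct2[OF conjunct2[OF sp]]] by blast
lemma cmp_assoc: "a \<in> Ob \<Longrightarrow> b \<in> Ob \<Longrightarrow> c \<in> Ob \<Longrightarrow> d \<in> Ob \<Longrightarrow> f \<in> Hom C a b \<Longrightarrow> g \<in> Hom C b c \<Longrightarrow> h \<in> Hom C c d
   \<Longrightarrow> cmp C h (cmp C g f) = cmp C (cmp C h g) f"
  using conjunct1[OF conjunct2[OF conjunct2[OF conjunct2[OF sp]]]] by blast
lemma unit_ob[simp]: "I \<in> Ob" using conjunct1[OF conjunct2[OF conjunct2[OF conjunct2[OF conjunct2[OF sp]]]]] by blast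
lemma tob_ob[simp]: "a \<in> Ob \<Longrightarrow> b \<in> Ob \<Longrightarrow> a \<otimes> b \<in> Ob" using conjunct1[OF conjunct2[OF conjunct2[OF conjunct2[OF conjunct2[OF conjunct2[OF sp]]]]]] by blast
lemma tarr_hom: "a \<in> Ob \<Longrightarrow> b \<in> Ob \<Longrightarrow> c \<in> Ob \<Longrightarrow> d \<in> Ob \<Longrightarrow> f \<in> Hom C a b \<Longrightarrow> g \<in> Hom C c d
   \<Longrightarrow> tarr C f g \<in> Hom C (a \<otimes> c) (b \<otimes> d)"
  using conjunct1[OF conjunct2[OF conjunct2[OF conjunct2[OF conjunct2[OF conjunct2[OF conjunct2[OF sp]]]]]]] by blast
lemma tarr_id: "a \<in> Ob \<Longrightarrow> b \<in> Ob \<Longrightarrow> tarr C (idm C a) (idm C b) = idm C (a \<otimes> b)"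
  using conjunct1[OF conjunct2[OF conjunct2[OF conjunct2[OF conjunct2[OF conjunct2[OF conjunct2[OF conjunct2[OF sp]]]]]]]] by blast
lemma interch: "a \<in> Ob \<Longrightarrow> b \<in> Ob \<Longrightarrow> c \<in> Ob \<Longrightarrow> d \<in> Ob \<Longrightarrow> e \<in> Ob \<Longrightarrow> k \<in> Ob \<Longrightarrow>
   f \<in> Hom C a b \<Longrightarrow> f' \<in> Hom C b c \<Longrightarrow> g \<in> Hom C d e \<Longrightarrow> g' \<in> Hom C e k \<Longrightarrow>
   tarr C (cmp C f' f) (cmp C g' g) = cmp C (tarr C f' g') (tarr C f g)"
  using conjunct1[OF conjunct2[OF conjunct2[OF conjunct2[OF conjunct2[OF conjunct2[OF conjunct2[OF conjunct2[OF conjunct2[OF sp]]]]]]]]] by blast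
lemma tob_assoc[simp]: "a \<in> Ob \<Longrightarrow> b \<in> Ob \<Longrightarrow> c \<in> Ob \<Longrightarrow> (a \<otimes> b) \<otimes> c = a \<otimes> (b \<otimes> c)"
  using conjunct1[OF conjunct2[OF conjunct2[OF conjunct2[OF conjunct2[OF conjunct2[OF conjunct2[OF conjunct2[OF conjunct2[OF conjunct2[OF sp]]]]]]]]]] by metis
lemma tob_unitL[simp]: "a \<in> Ob \<Longrightarrow> I \<otimes> a = a" using conjunct1[OF conjunct2[OF conjunct2[OF conjunct2[OF conjunct2[OF conjunct2[OF conjunct2[OF conjunct2[OF conjunct2[OF conjunct2[OF conjunct2[OF sp]]]]]]]]]]] by blast
lemma tob_unitR[simp]: "a \<in> Ob \<Longrightarrow> a \<otimes> I = a" using conjunct1[OF conjunct2[OF conjunct2[OF conjunct2[OF conjunct2[OF conjunct2[OF conjunct2[OF conjunct2[OF conjunct2[OF conjunct2[OF conjunct2[OF sp]]]]]]]]]]] by blast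
lemma tarr_assoc: "a \<in> Ob \<Longrightarrow> b \<in> Ob \<Longrightarrow> c \<in> Ob \<Longrightarrow> d \<in> Ob \<Longrightarrow> e \<in> Ob \<Longrightarrow> k \<in> Ob \<Longrightarrow>
   f \<in> Hom C a b \<Longrightarrow> g \<in> Hom C c d \<Longrightarrow> h \<in> Hom C e k \<Longrightarrow>
   tarr C f (tarr C g h) = tarr C (tarr C f g) h"
  using conjunct1[OF conjunct2[OF conjunct2[OF conjunct2[OF conjunct2[OF conjunct2[OF conjunct2[OF conjunct2[OF conjunct2[OF conjunct2[OF conjunct2[OF conjunct2[OF sp]]]]]]]]]]]] by blast
lemma tarr_unitL: "a \<in> Ob \<Longrightarrow> b \<in> Ob \<Longrightarrow> f \<in> Hom C a b \<Longrightarrow> tarr C (idm C I) f = f"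
  using conjunct2[OF conjunct2[OF conjunct2[OF conjunct2[OF conjunct2[OF conjunct2[OF conjunct2[OF conjunct2[OF conjunct2[OF conjunct2[OF conjunct2[OF conjunct2[OF sp]]]]]]]]]]]] by blast
lemma tarr_unitR: "a \<in> Ob \<Longrightarrow> b \<in> Ob \<Longrightarrow> f \<in> Hom C a b \<Longrightarrow> tarr C f (idm C I) = f"
  using conjunct2[OF conjunct2[OF conjunct2[OF conjunct2[OF conjunct2[OF conjunct2[OF conjunct2[OF conjunct2[OF conjunct2[OF conjunct2[OF conjunct2[OF conjunct2[OF sp]]]]]]]]]]]] by blast


definition Ar :: "('o,'m) ar \<Rightarrow> bool" where
  "Ar f \<longleftrightarrow> f \<noteq> None \<and> dm f \<in> Ob \<and> cd f \<in> Ob \<and> mr f \<in> Hom C (dm f) (cd f)"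
definition Ok :: "('o,'m) ar \<Rightarrow> bool" where "Ok f \<longleftrightarrow> f = None \<or> Ar f"

definition mk :: "'o \<Rightarrow> 'm \<Rightarrow> 'o \<Rightarrow> ('o,'m) ar" where
  "mk a g b = (if a \<in> Ob \<and> b \<in> Ob \<and> g \<in> Hom C a b then Some (a,g,b) else None)"
definition cp :: "('o,'m) ar \<Rightarrow> ('o,'m) ar \<Rightarrow> ('o,'m) ar" (infixr "\<bullet>" 55) where
  "g \<bullet> f = (if Ar f \<and> Ar g \<and> dm g = cd f then Some (dm f, cmp C (mr g) (mr f), cd g) else None)"
definition ID :: "'o \<Rightarrow> ('o,'m) ar" where "ID a = mk a (idm C a) a"
definition W :: "'o \<Rightarrow> ('o,'m) ar \<Rightarrow> 'o \<Rightarrow> ('o,'m) ar" where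
  "W L f R = (if L \<in> Ob \<and> R \<in> Ob \<and> Ar f then
     Some (L \<otimes> (dm f \<otimes> R), tarr C (idm C L) (tarr C (mr f) (idm C R)), L \<otimes> (cd f \<otimes> R)) else None)"
definition tn :: "('o,'m) ar \<Rightarrow> ('o,'m) ar \<Rightarrow> ('o,'m) ar" where
  "tn f g = (if Ar f \<and> Ar g then Some (dm f \<otimes> dm g, tarr C (mr f) (mr g), cd f \<otimes> cd g) else None)"

lemma Ar_Some: "Ar (Some (a,g,b)) \<longleftrightarrow> a \<in> Ob \<and> b \<in> Ob \<and> g \<in> Hom C a b" by (simp add: Ar_def)
lemma Ar_mk[simp]: "Ar (mk a g b) \<longleftrightarrow> a \<in> Ob \<and> b \<in> Ob \<and> g \<in> Hom C a b" by (simp add: mk_def Ar_def)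
lemma mk_dm[simp]: "Ar (mk a g b) \<Longrightarrow> dm (mk a g b) = a" and mk_cd[simp]: "Ar (mk a g b) \<Longrightarrow> cd (mk a g b) = b"
  and mk_mr: "Ar (mk a g b) \<Longrightarrow> mr (mk a g b) = g" by (auto simp: mk_def Ar_def split: if_splits)
lemma Ok_mk[simp]: "Ok (mk a g b)" by (simp add: Ok_def mk_def Ar_def)
lemma Ar_Ok[simp]: "Ar f \<Longrightarrow> Ok f" by (simp add: Ok_def)
lemma ArD: "Ar f \<Longrightarrow> dm f \<in> Ob" "Ar f \<Longrightarrow> cd f \<in> Ob" "Ar f \<Longrightarrow> mr f \<in> Hom C (dm f) (cd f)"
  by (simp_all add: Ar_def)
lemma ArD_s: "Ar f \<Longrightarrow> dm f \<in> Ob" "Ar f \<Longrightarrow> cd f \<in> Ob" "Ar f \<Longrightarrow> mr f \<in> Hom C (dm f) (cd f)"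
  by (simp_all add: Ar_def)
lemma Ar_None[simp]: "\<not> Ar None" by (simp add: Ar_def)
declare ArD_s[simp]
lemma Ar_Some_ex: "Ar f \<Longrightarrow> f = Some (dm f, mr f, cd f)"
  by (cases f) (auto simp: Ar_def dm_def cd_def mr_def simp del: ArD_s)

lemma Ar_cp_iff[simp]: "Ar (g \<bullet> f) \<longleftrightarrow> Ar f \<and> Ar g \<and> dm g = cd f"
  unfolding cp_def by (auto simp: Ar_def simp del: ArD_s intro: cmp_hom)
lemma dm_cp[simp]: "Ar (g \<bullet> f) \<Longrightarrow> dm (g \<bullet> f) = dm f" and cd_cp[simp]: "Ar (g \<bullet> f) \<Longrightarrow> cd (g \<bullet> f) = cd g"
  and mr_cp: "Ar (g \<bullet> f) \<Longrightarrow> mr (g \<bullet> f) = cmp C (mr g) (mr f)"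
  by (auto simp: cp_def split: if_splits)
lemma Ok_cp[simp]: "Ok (g \<bullet> f)" by (auto simp: Ok_def cp_def Ar_def simp del: ArD_s intro: cmp_hom)
lemma cp_None[simp]: "g \<bullet> None = None" "None \<bullet> f = None" by (auto simp: cp_def)

lemma Ar_ID[simp]: "Ar (ID a) \<longleftrightarrow> a \<in> Ob" by (auto simp: ID_def intro: id_hom)
lemma dm_ID[simp]: "a \<in> Ob \<Longrightarrow> dm (ID a) = a" and cd_ID[simp]: "a \<in> Ob \<Longrightarrow> cd (ID a) = a"
  and mr_ID: "a \<in> Ob \<Longrightarrow> mr (ID a) = idm C a" by (auto simp: ID_def mk_def intro: id_hom)
lemma Ok_ID[simp]: "Ok (ID a)" by (simp add: ID_def)

lemma Ar_W_iff[simp]: "Ar (W L f R) \<longleftrightarrow> L \<in> Ob \<and> R \<in> Ob \<and> Ar f"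
proof -
  have "Ar f \<Longrightarrow> L \<in> Ob \<Longrightarrow> R \<in> Ob \<Longrightarrow> tarr C (idm C L) (tarr C (mr f) (idm C R)) \<in> Hom C (L \<otimes> (dm f \<otimes> R)) (L \<otimes> (cd f \<otimes> R))"
    by (intro tarr_hom[of L L "dm f \<otimes> R" "cd f \<otimes> R"] tarr_hom[of "dm f" "cd f" R R] id_hom) (auto simp: ArD_s)
  thus ?thesis unfolding W_def by (auto simp: Ar_Some)
qed
lemma dm_W[simp]: "Ar (W L f R) \<Longrightarrow> dm (W L f R) = L \<otimes> (dm f \<otimes> R)"
  and cd_W[simp]: "Ar (W L f R) \<Longrightarrow> cd (W L f R) = L \<otimes> (cd f \<otimes> R)"
  and mr_W: "Ar (W L f R) \<Longrightarrow> mr (W L f R) = tarr C (idm C L) (tarr C (mr f) (idm C R))"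
  by (auto simp: W_def split: if_splits)
lemma Ok_W[simp]: "Ok (W L f R)" unfolding Ok_def using Ar_W_iff[of L f R] by (auto simp: W_def)
lemma W_None[simp]: "W L None R = None" by (simp add: W_def)

lemma Ar_tn_iff[simp]: "Ar (tn f g) \<longleftrightarrow> Ar f \<and> Ar g"
proof -
  have "Ar f \<Longrightarrow> Ar g \<Longrightarrow> tarr C (mr f) (mr g) \<in> Hom C (dm f \<otimes> dm g) (cd f \<otimes> cd g)"
    by (intro tarr_hom) (auto simp: ArD_s)
  thus ?thesis unfolding tn_def by (auto simp: Ar_Some)
qed
lemma dm_tn[simp]: "Ar (tn f g) \<Longrightarrow> dm (tn f g) = dm f \<otimes> dm g" and cd_tn[simp]: "Ar (tn f g) \<Longrightarrow> cd (tn f g) = cd f \<otimes> cd g"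
  and mr_tn: "Ar (tn f g) \<Longrightarrow> mr (tn f g) = tarr C (mr f) (mr g)" by (auto simp: tn_def split: if_splits)

lemma ar_eqI: "Ar f \<Longrightarrow> Ar g \<Longrightarrow> dm f = dm g \<Longrightarrow> mr f = mr g \<Longrightarrow> cd f = cd g \<Longrightarrow> f = g"
  by (metis Ar_Some_ex)
lemma Ok_cases: "Ok f \<Longrightarrow> (f = None \<Longrightarrow> P) \<Longrightarrow> (Ar f \<Longrightarrow> P) \<Longrightarrow> P" by (auto simp: Ok_def)

lemma cp_assoc[simp]: "(h \<bullet> g) \<bullet> f = h \<bullet> (g \<bullet> f)"
proof (cases "Ar f \<and> Ar g \<and> Ar h \<and> dm h = cd g \<and> dm g = cd f")
  case True
  have "cmp C (cmp C (mr h) (mr g)) (mr f) = cmp C (mr h) (cmp C (mr g) (mr f))"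
    using True ArD[of f] ArD[of g] ArD[of h] by (intro cmp_assoc[symmetric, of "dm f" "cd f" "cd g" "cd h"]) auto
  thus ?thesis using True by (intro ar_eqI) (auto simp: mr_cp)
next
  case False
  hence "\<not> Ar ((h \<bullet> g) \<bullet> f)" "\<not> Ar (h \<bullet> (g \<bullet> f))" by auto
  moreover have "Ok ((h \<bullet> g) \<bullet> f)" "Ok (h \<bullet> (g \<bullet> f))" by auto
  ultimately show ?thesis by (auto simp: Ok_def)
qed

lemma cp_IDl[simp]: "Ok f \<Longrightarrow> cd f = a \<Longrightarrow> ID a \<bullet> f = f"
  by (erule Ok_cases) (auto intro!: ar_eqI simp: mr_cp mr_ID ArD cmp_idl[OF ArD(1) ArD(2) ArD(3)])
lemma cp_IDr[simp]: "Ok f \<Longrightarrow> dm f = a \<Longrightarrow> f \<bullet> ID a = f"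
  by (erule Ok_cases) (auto intro!: ar_eqI simp: mr_cp mr_ID ArD cmp_idr[OF ArD(1) ArD(2) ArD(3)])
lemma cp_IDl2[simp]: "cd p = a \<Longrightarrow> ID a \<bullet> (p \<bullet> r) = p \<bullet> r"
proof (cases "Ar (p \<bullet> r)")
  case True
  assume "cd p = a"
  thus ?thesis using True by (subst cp_IDl) auto
next
  case False
  thus ?thesis using Ok_cp[of p r] by (auto simp: Ok_def simp del: Ar_cp_iff)
qed
lemma cp_IDmid[simp]: "dm p = a \<Longrightarrow> p \<bullet> (ID a \<bullet> r) = p \<bullet> r"
proof -
  assume a: "dm p = a"
  show ?thesis
  proof (cases "Ar r \<and> cd r = a")
    case True thus ?thesis by (subst cp_IDl) (auto simp: Ok_def)
  next
    case False
    hence "\<not> Ar (p \<bullet> (ID a \<bullet> r))" "\<not> Ar (p \<bullet> r)" using a by auto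
    moreover have "Ok (p \<bullet> (ID a \<bullet> r))" "Ok (p \<bullet> r)" by auto
    ultimately show ?thesis by (auto simp: Ok_def)
  qed
qed

lemma W_ID[simp]: "a \<in> Ob \<Longrightarrow> L \<in> Ob \<Longrightarrow> R \<in> Ob \<Longrightarrow> W L (ID a) R = ID (L \<otimes> (a \<otimes> R))"
  by (intro ar_eqI) (auto simp: mr_W mr_ID tarr_id)

lemma tarr_cmp_id_l: "a \<in> Ob \<Longrightarrow> b \<in> Ob \<Longrightarrow> c \<in> Ob \<Longrightarrow> L \<in> Ob \<Longrightarrow> f \<in> Hom C a b \<Longrightarrow> g \<in> Hom C b c \<Longrightarrow>
  tarr C (idm C L) (cmp C g f) = cmp C (tarr C (idm C L) g) (tarr C (idm C L) f)"
  using interch[of L L L a b c "idm C L" "idm C L" f g] by (simp add: id_hom cmp_idl)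
lemma tarr_cmp_id_r: "a \<in> Ob \<Longrightarrow> b \<in> Ob \<Longrightarrow> c \<in> Ob \<Longrightarrow> R \<in> Ob \<Longrightarrow> f \<in> Hom C a b \<Longrightarrow> g \<in> Hom C b c \<Longrightarrow>
  tarr C (cmp C g f) (idm C R) = cmp C (tarr C g (idm C R)) (tarr C f (idm C R))"
  using interch[of a b c R R R f g "idm C R" "idm C R"] by (simp add: id_hom cmp_idl)

lemma W_cp[simp]: "L \<in> Ob \<Longrightarrow> R \<in> Ob \<Longrightarrow> dm g = cd f \<Longrightarrow> W L (g \<bullet> f) R = W L g R \<bullet> W L f R"
proof (cases "Ar f \<and> Ar g")
  case True
  assume a: "L \<in> Ob" "R \<in> Ob" "dm g = cd f"
  hence h: "dm f \<in> Ob" "cd f \<in> Ob" "cd g \<in> Ob" "mr f \<in> Hom C (dm f) (cd f)" "mr g \<in> Hom C (cd f) (cd g)"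
    using True ArD_s[of g] by auto
  have "tarr C (cmp C (mr g) (mr f)) (idm C R) = cmp C (tarr C (mr g) (idm C R)) (tarr C (mr f) (idm C R))"
    using h a by (intro tarr_cmp_id_r) auto
  moreover have "tarr C (idm C L) (cmp C (tarr C (mr g) (idm C R)) (tarr C (mr f) (idm C R)))
    = cmp C (tarr C (idm C L) (tarr C (mr g) (idm C R))) (tarr C (idm C L) (tarr C (mr f) (idm C R)))"
    using h a by (intro tarr_cmp_id_l[where a="dm f \<otimes> R" and b="cd f \<otimes> R" and c="cd g \<otimes> R"]) (auto intro!: tarr_hom id_hom)
  ultimately show ?thesis using a True by (intro ar_eqI) (auto simp: mr_W mr_cp)
next
  case False thus ?thesis by (auto simp: W_def cp_def)
qed

lemma W_W[simp]: "L \<in> Ob \<Longrightarrow> R \<in> Ob \<Longrightarrow> L' \<in> Ob \<Longrightarrow> R' \<in> Ob \<Longrightarrow>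
   W L (W L' f R') R = W (L \<otimes> L') f (R' \<otimes> R)"
proof (cases "Ar f")
  case True
  assume a: "L \<in> Ob" "R \<in> Ob" "L' \<in> Ob" "R' \<in> Ob"
  let ?a = "dm f" and ?b = "cd f" and ?f = "mr f"
  have ab: "?a \<in> Ob" "?b \<in> Ob" "?f \<in> Hom C ?a ?b" using True by auto
  have "tarr C (idm C L) (tarr C (tarr C (idm C L') (tarr C ?f (idm C R'))) (idm C R))
      = tarr C (idm C L) (tarr C (idm C L') (tarr C (tarr C ?f (idm C R')) (idm C R)))"
    using a ab by (subst tarr_assoc[symmetric, where a=L' and b=L' and c="?a \<otimes> R'" and d="?b \<otimes> R'" and e=R and k=R])
      (auto intro!: tarr_hom id_hom)
  also have "\<dots> = tarr C (idm C L) (tarr C (idm C L') (tarr C ?f (tarr C (idm C R') (idm C R))))"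
    using a ab by (subst tarr_assoc[symmetric, where a="?a" and b="?b" and c=R' and d=R' and e=R and k=R])
      (auto intro!: tarr_hom id_hom)
  also have "\<dots> = tarr C (tarr C (idm C L) (idm C L')) (tarr C ?f (tarr C (idm C R') (idm C R)))"
    using a ab by (subst tarr_assoc[where a=L and b=L and c=L' and d=L' and e="?a \<otimes> (R' \<otimes> R)" and k="?b \<otimes> (R' \<otimes> R)"])
      (auto intro!: tarr_hom id_hom)
  finally show ?thesis using a ab True by (intro ar_eqI) (auto simp: mr_W tarr_id)
next
  case False thus ?thesis by (simp add: W_def)
qed

lemma W_tn: "L \<in> Ob \<Longrightarrow> R \<in> Ob \<Longrightarrow> W L f R = tn (ID L) (tn f (ID R))"
proof (cases "Ar f")
  case True
  assume "L \<in> Ob" "R \<in> Ob"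
  thus ?thesis using True by (intro ar_eqI) (auto simp: mr_W mr_tn mr_ID)
next
  case False
  hence "tn f (ID R) = None" by (simp add: tn_def)
  moreover have "tn (ID L) None = None" by (simp add: tn_def)
  ultimately show ?thesis using False by (simp add: W_def)
qed
lemma tn_ID: "a \<in> Ob \<Longrightarrow> b \<in> Ob \<Longrightarrow> tn (ID a) (ID b) = ID (a \<otimes> b)"
  by (intro ar_eqI) (auto simp: mr_tn mr_ID tarr_id)
lemma tn_assoc: "Ar f \<Longrightarrow> Ar g \<Longrightarrow> Ar h \<Longrightarrow> tn (tn f g) h = tn f (tn g h)"
  by (intro ar_eqI) (auto simp: mr_tn tarr_assoc[of "dm f" "cd f" "dm g" "cd g" "dm h" "cd h"])
lemma tn_cp: "Ar f \<Longrightarrow> Ar f' \<Longrightarrow> Ar g \<Longrightarrow> Ar g' \<Longrightarrow> dm f' = cd f \<Longrightarrow> dm g' = cd g \<Longrightarrow>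
   tn f' g' \<bullet> tn f g = tn (f' \<bullet> f) (g' \<bullet> g)"
proof -
  assume a: "Ar f" "Ar f'" "Ar g" "Ar g'" "dm f' = cd f" "dm g' = cd g"
  have "mr f' \<in> Hom C (cd f) (cd f')" "mr g' \<in> Hom C (cd g) (cd g')" using a ArD_s[of f'] ArD_s[of g'] by auto
  hence "tarr C (cmp C (mr f') (mr f)) (cmp C (mr g') (mr g)) = cmp C (tarr C (mr f') (mr g')) (tarr C (mr f) (mr g))"
    using a by (intro interch[of "dm f" "cd f" "cd f'" "dm g" "cd g" "cd g'"]) auto
  thus ?thesis using a by (intro ar_eqI) (auto simp: mr_tn mr_cp)
qed

lemma tnID3: "a \<in> Ob \<Longrightarrow> b \<in> Ob \<Longrightarrow> c \<in> Ob \<Longrightarrow> Ar h \<Longrightarrow> tn (ID (a \<otimes> (b \<otimes> c))) h = tn (ID a) (tn (ID b) (tn (ID c) h))"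
proof -
  assume o: "a \<in> Ob" "b \<in> Ob" "c \<in> Ob" "Ar h"
  have "ID (a \<otimes> (b \<otimes> c)) = tn (ID a) (tn (ID b) (ID c))" using o by (simp add: tn_ID)
  hence "tn (ID (a \<otimes> (b \<otimes> c))) h = tn (tn (ID a) (tn (ID b) (ID c))) h" by simp
  also have "\<dots> = tn (ID a) (tn (ID b) (tn (ID c) h))" using o by (simp add: tn_assoc)
  finally show ?thesis .
qed

lemma swap0: assumes "Ar f" "Ar g" "L \<in> Ob" "M \<in> Ob" "R \<in> Ob"
  shows "W L f (M \<otimes> (cd g \<otimes> R)) \<bullet> W (L \<otimes> (dm f \<otimes> M)) g R
       = W (L \<otimes> (cd f \<otimes> M)) g R \<bullet> W L f (M \<otimes> (dm g \<otimes> R))"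
proof -
  have o: "dm f \<in> Ob" "cd f \<in> Ob" "dm g \<in> Ob" "cd g \<in> Ob" using assms by auto
  have w1: "W L f (M \<otimes> (cd g \<otimes> R)) = tn (ID L) (tn f (tn (ID M) (tn (ID (cd g)) (ID R))))"
    using assms o by (simp add: W_tn tn_ID)
  have w2: "W (L \<otimes> (dm f \<otimes> M)) g R = tn (ID L) (tn (ID (dm f)) (tn (ID M) (tn g (ID R))))"
    using assms o by (simp add: W_tn tnID3)
  have w3: "W L f (M \<otimes> (dm g \<otimes> R)) = tn (ID L) (tn f (tn (ID M) (tn (ID (dm g)) (ID R))))"
    using assms o by (simp add: W_tn tn_ID)
  have w4: "W (L \<otimes> (cd f \<otimes> M)) g R = tn (ID L) (tn (ID (cd f)) (tn (ID M) (tn g (ID R))))"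
    using assms o by (simp add: W_tn tnID3)
  have "tn (ID L) (tn f (tn (ID M) (tn (ID (cd g)) (ID R)))) \<bullet> tn (ID L) (tn (ID (dm f)) (tn (ID M) (tn g (ID R))))
     = tn (ID L) (tn f (tn (ID M) (tn g (ID R))))"
    using assms o by (simp add: tn_cp)
  moreover have "tn (ID L) (tn (ID (cd f)) (tn (ID M) (tn g (ID R)))) \<bullet> tn (ID L) (tn f (tn (ID M) (tn (ID (dm g)) (ID R))))
     = tn (ID L) (tn f (tn (ID M) (tn g (ID R))))"
    using assms o by (simp add: tn_cp)
  ultimately show ?thesis unfolding w1 w2 w3 w4 by simp
qed

lemma swap1: assumes "Ok f" "Ok g" "L \<in> Ob" "M \<in> Ob" "R \<in> Ob"
  shows "W L f (M \<otimes> (cd g \<otimes> R)) \<bullet> W (L \<otimes> (dm f \<otimes> M)) g R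
       = W (L \<otimes> (cd f \<otimes> M)) g R \<bullet> W L f (M \<otimes> (dm g \<otimes> R))"
  using assms by (cases "Ar f \<and> Ar g") (auto simp: Ok_def swap0)

text \<open>Swap rules in context form, for simp with instantiated f, g, M.\<close>
lemma swL: "L \<in> Ob \<Longrightarrow> M \<in> Ob \<Longrightarrow> R \<in> Ob \<Longrightarrow> Ok f \<Longrightarrow> Ok g \<Longrightarrow> X1 = M \<otimes> (cd g \<otimes> R) \<Longrightarrow> X2 = L \<otimes> (dm f \<otimes> M) \<Longrightarrow>
  W L f X1 \<bullet> (W X2 g R \<bullet> r) = W (L \<otimes> (cd f \<otimes> M)) g R \<bullet> (W L f (M \<otimes> (dm g \<otimes> R)) \<bullet> r)"
  using swap1[of f g L M R] by (simp add: cp_assoc[symmetric] del: cp_assoc)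
lemma swR: "L \<in> Ob \<Longrightarrow> M \<in> Ob \<Longrightarrow> R \<in> Ob \<Longrightarrow> Ok f \<Longrightarrow> Ok g \<Longrightarrow> X1 = L \<otimes> (cd f \<otimes> M) \<Longrightarrow> X2 = M \<otimes> (dm g \<otimes> R) \<Longrightarrow>
  W X1 g R \<bullet> (W L f X2 \<bullet> r) = W L f (M \<otimes> (cd g \<otimes> R)) \<bullet> (W (L \<otimes> (dm f \<otimes> M)) g R \<bullet> r)"
  using swap1[of f g L M R] by (simp add: cp_assoc[symmetric] del: cp_assoc)

lemma W_I1: "Ok f \<Longrightarrow> W I f I = f"
  by (erule Ok_cases) (auto intro!: ar_eqI simp: mr_W tarr_unitL[of "dm f \<otimes> I" "cd f \<otimes> I"] tarr_unitR[of "dm f" "cd f"] id_hom)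

lemma ctx_eq: "(\<And>r. P \<bullet> r = Q \<bullet> r) \<Longrightarrow> Ar P \<Longrightarrow> Ar Q \<Longrightarrow> dm P = dm Q \<Longrightarrow> P = Q"
  by (metis cp_IDr Ar_Ok)

lemma tn_split: "Ar f \<Longrightarrow> Ar g \<Longrightarrow> tn f g = W I f (cd g) \<bullet> W (dm f) g I"
proof -
  assume a: "Ar f" "Ar g"
  have "tn f g = tn (f \<bullet> ID (dm f)) (ID (cd g) \<bullet> g)" using a by simp
  also have "\<dots> = tn f (ID (cd g)) \<bullet> tn (ID (dm f)) g" using a by (simp add: tn_cp)
  also have "\<dots> = W I f (cd g) \<bullet> W (dm f) g I"
  proof -
    have h: "tarr C (mr f) (idm C (cd g)) \<in> Hom C (dm f \<otimes> cd g) (cd f \<otimes> cd g)" using a by (intro tarr_hom) (auto intro: id_hom)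
    have "tn f (ID (cd g)) = W I f (cd g)" using a
      by (intro ar_eqI) (auto simp: mr_tn mr_ID mr_W tarr_unitL[OF _ _ h])
    moreover have "tn (ID (dm f)) g = W (dm f) g I" using a
      by (intro ar_eqI) (auto simp: mr_tn mr_ID mr_W tarr_unitR[of "dm g" "cd g"])
    ultimately show ?thesis by simp
  qed
  finally show ?thesis .
qed

definition isoT :: "('o,'m) ar \<Rightarrow> bool" where
  "isoT F \<longleftrightarrow> Ar F \<and> (\<exists>G. Ar G \<and> dm G = cd F \<and> cd G = dm F \<and> G \<bullet> F = ID (dm F) \<and> F \<bullet> G = ID (cd F))"

lemma isoT_ID: "a \<in> Ob \<Longrightarrow> isoT (ID a)" unfolding isoT_def by (rule conjI, simp, rule exI[of _ "ID a"]) simp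

lemma isoT_cp: assumes "isoT F" "isoT G" "dm F = cd G" shows "isoT (F \<bullet> G)"
proof -
  obtain F' where F': "Ar F'" "dm F' = cd F" "cd F' = dm F" "F' \<bullet> F = ID (dm F)" "F \<bullet> F' = ID (cd F)" using assms(1) isoT_def by auto
  obtain G' where G': "Ar G'" "dm G' = cd G" "cd G' = dm G" "G' \<bullet> G = ID (dm G)" "G \<bullet> G' = ID (cd G)" using assms(2) isoT_def by auto
  have AF: "Ar F" "Ar G" using assms isoT_def by auto
  have "(G' \<bullet> F') \<bullet> (F \<bullet> G) = G' \<bullet> ((F' \<bullet> F) \<bullet> G)" by simp
  also have "\<dots> = ID (dm G)" using F' G' AF assms(3) by simp
  finally have 1: "(G' \<bullet> F') \<bullet> (F \<bullet> G) = ID (dm G)" .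
  have "(F \<bullet> G) \<bullet> (G' \<bullet> F') = F \<bullet> ((G \<bullet> G') \<bullet> F')" by simp
  also have "\<dots> = ID (cd F)" using F' G' AF assms(3) by simp
  finally have 2: "(F \<bullet> G) \<bullet> (G' \<bullet> F') = ID (cd F)" .
  show ?thesis unfolding isoT_def using AF F' G' assms(3) 1 2 by (intro conjI exI[of _ "G' \<bullet> F'"]) auto
qed

lemma isoT_cancel: assumes "isoT (F \<bullet> G)" "isoT G" "Ar F" "dm F = cd G" shows "isoT F"
proof -
  obtain G' where G': "Ar G'" "dm G' = cd G" "cd G' = dm G" "G' \<bullet> G = ID (dm G)" "G \<bullet> G' = ID (cd G)" using assms(2) isoT_def by auto
  have AG: "Ar G" using assms isoT_def by auto
  have iG': "isoT G'" unfolding isoT_def using G' AG by (intro conjI exI[of _ G]) auto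
  have "isoT ((F \<bullet> G) \<bullet> G')" using G' AG assms by (intro isoT_cp[OF assms(1) iG']) auto
  moreover have "(F \<bullet> G) \<bullet> G' = F" using G' AG assms by simp
  ultimately show ?thesis by simp
qed

lemma isoT_cancel2: assumes "isoT (F \<bullet> G)" "isoT F" "Ar G" "dm F = cd G" shows "isoT G"
proof -
  obtain F' where F': "Ar F'" "dm F' = cd F" "cd F' = dm F" "F' \<bullet> F = ID (dm F)" "F \<bullet> F' = ID (cd F)" using assms(2) isoT_def by auto
  have AF: "Ar F" using assms isoT_def by auto
  have iF': "isoT F'" unfolding isoT_def using F' AF by (intro conjI exI[of _ F]) auto
  have "isoT (F' \<bullet> (F \<bullet> G))" using F' AF assms by (intro isoT_cp[OF iF' assms(1)]) auto
  moreover have "F' \<bullet> (F \<bullet> G) = G" using F' AF assms by (simp add: cp_assoc[symmetric] del: cp_assoc)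
  ultimately show ?thesis by simp
qed

lemma isoT_W: assumes "isoT F" "L \<in> Ob" "R \<in> Ob" shows "isoT (W L F R)"
proof -
  obtain F' where F': "Ar F'" "dm F' = cd F" "cd F' = dm F" "F' \<bullet> F = ID (dm F)" "F \<bullet> F' = ID (cd F)" using assms(1) isoT_def by auto
  have AF: "Ar F" using assms isoT_def by auto
  have "W L F' R \<bullet> W L F R = ID (dm (W L F R))" using F' AF assms by (simp add: W_cp[symmetric])
  moreover have "W L F R \<bullet> W L F' R = ID (cd (W L F R))" using F' AF assms by (simp add: W_cp[symmetric])
  ultimately show ?thesis unfolding isoT_def using F' AF assms by (intro conjI exI[of _ "W L F' R"]) auto
qed

lemma iso_isoT: "a \<in> Ob \<Longrightarrow> b \<in> Ob \<Longrightarrow> iso C f a b \<longleftrightarrow> isoT (mk a f b)"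
proof
  assume o: "a \<in> Ob" "b \<in> Ob" and i: "iso C f a b"
  then obtain g where g: "f \<in> Hom C a b" "g \<in> Hom C b a" "cmp C g f = idm C a" "cmp C f g = idm C b" unfolding iso_def by auto
  have "mk b g a \<bullet> mk a f b = ID a" "mk a f b \<bullet> mk b g a = ID b" using g o
    by (auto intro!: ar_eqI simp: mr_cp mk_mr mr_ID)
  thus "isoT (mk a f b)" unfolding isoT_def using g o by (intro conjI exI[of _ "mk b g a"]) auto
next
  assume o: "a \<in> Ob" "b \<in> Ob" and i: "isoT (mk a f b)"
  then obtain G where G: "Ar G" "dm G = b" "cd G = a" "G \<bullet> mk a f b = ID a" "mk a f b \<bullet> G = ID b" and f: "f \<in> Hom C a b"
    unfolding isoT_def by auto
  have "cmp C (mr G) f = idm C a" using arg_cong[OF G(4), of mr] G(1-3) f o by (simp add: mr_cp mk_mr mr_ID)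
  moreover have "cmp C f (mr G) = idm C b" using arg_cong[OF G(5), of mr] G(1-3) f o by (simp add: mr_cp mk_mr mr_ID)
  ultimately have "cmp C (mr G) f = idm C a" "cmp C f (mr G) = idm C b" by auto
  thus "iso C f a b" unfolding iso_def using G f ArD_s(3)[of G] by auto
qed

end



locale galg = smcl C for C :: "('o,'m) smc" +
  fixes A :: 'o and sg :: "'o \<Rightarrow> ('o,'m) ar" and m u d e :: "('o,'m) ar"
  assumes A_ob[simp]: "A \<in> Ob"
  and sg_Ar[simp]: "X \<in> Ob \<Longrightarrow> Ar (sg X)"
  and sg_dm[simp]: "X \<in> Ob \<Longrightarrow> dm (sg X) = A \<otimes> X"
  and sg_cd[simp]: "X \<in> Ob \<Longrightarrow> cd (sg X) = X \<otimes> A"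
  and sg_unit[simp]: "sg I = ID A"
  and sg_mon: "Y \<in> Ob \<Longrightarrow> Z \<in> Ob \<Longrightarrow> sg (Y \<otimes> Z) = W Y (sg Z) I \<bullet> W I (sg Y) Z"
  and sg_nat: "Ar f \<Longrightarrow> W I f A \<bullet> W I (sg (dm f)) I = W I (sg (cd f)) I \<bullet> W A f I"
  and m_Ar[simp]: "Ar m" and m_dm[simp]: "dm m = A \<otimes> A" and m_cd[simp]: "cd m = A"
  and u_Ar[simp]: "Ar u" and u_dm[simp]: "dm u = I" and u_cd[simp]: "cd u = A"
  and d_Ar[simp]: "Ar d" and d_dm[simp]: "dm d = A" and d_cd[simp]: "cd d = A \<otimes> A"
  and e_Ar[simp]: "Ar e" and e_dm[simp]: "dm e = A" and e_cd[simp]: "cd e = I"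
  and ax_as: "W I m I \<bullet> W I m A = W I m I \<bullet> W A m I"
  and ax_ul: "W I m I \<bullet> W I u A = ID A"
  and ax_ur: "W I m I \<bullet> W A u I = ID A"
  and ax_cas: "W I d A \<bullet> W I d I = W A d I \<bullet> W I d I"
  and ax_cul: "W I e A \<bullet> W I d I = ID A"
  and ax_cur: "W A e I \<bullet> W I d I = ID A"
  and ax_Zm: "X \<in> Ob \<Longrightarrow> W X m I \<bullet> W I (sg X) A \<bullet> W A (sg X) I = W I (sg X) I \<bullet> W I m X"
  and ax_Zu: "X \<in> Ob \<Longrightarrow> W X u I = W I (sg X) I \<bullet> W I u X"
  and ax_Zd: "X \<in> Ob \<Longrightarrow> W X d I \<bullet> W I (sg X) I = W I (sg X) A \<bullet> W A (sg X) I \<bullet> W I d X"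
  and ax_Ze: "X \<in> Ob \<Longrightarrow> W X e I \<bullet> W I (sg X) I = W I e X"
begin

lemma cx: "P = Q \<Longrightarrow> W L P R \<bullet> r = W L Q R \<bullet> r" by simp

lemma r_as: "L \<in> Ob \<Longrightarrow> R \<in> Ob \<Longrightarrow> Y = L \<otimes> A \<Longrightarrow> W L m R \<bullet> (W Y m R \<bullet> r) = W L m R \<bullet> (W L m (A \<otimes> R) \<bullet> r)"
  using cx[OF ax_as, of L R r] by simp
lemma r_ul: "L \<in> Ob \<Longrightarrow> R \<in> Ob \<Longrightarrow> X = A \<otimes> R \<Longrightarrow> W L m R \<bullet> (W L u X \<bullet> r) = ID (L \<otimes> (A \<otimes> R)) \<bullet> r"
  using cx[OF ax_ul, of L R r] by simp
lemma r_ur: "L \<in> Ob \<Longrightarrow> R \<in> Ob \<Longrightarrow> Y = L \<otimes> A \<Longrightarrow> W L m R \<bullet> (W Y u R \<bullet> r) = ID (L \<otimes> (A \<otimes> R)) \<bullet> r"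
  using cx[OF ax_ur, of L R r] by simp
lemma r_cas: "L \<in> Ob \<Longrightarrow> R \<in> Ob \<Longrightarrow> X = A \<otimes> R \<Longrightarrow> W L d X \<bullet> (W L d R \<bullet> r) = W (L \<otimes> A) d R \<bullet> (W L d R \<bullet> r)"
  using cx[OF ax_cas, of L R r] by simp
lemma r_cas': "L \<in> Ob \<Longrightarrow> R \<in> Ob \<Longrightarrow> Y = L \<otimes> A \<Longrightarrow> W Y d R \<bullet> (W L d R \<bullet> r) = W L d (A \<otimes> R) \<bullet> (W L d R \<bullet> r)"
  using cx[OF ax_cas, of L R r] by simp
lemma r_cul: "L \<in> Ob \<Longrightarrow> R \<in> Ob \<Longrightarrow> X = A \<otimes> R \<Longrightarrow> W L e X \<bullet> (W L d R \<bullet> r) = ID (L \<otimes> (A \<otimes> R)) \<bullet> r"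
  using cx[OF ax_cul, of L R r] by simp
lemma r_cur: "L \<in> Ob \<Longrightarrow> R \<in> Ob \<Longrightarrow> Y = L \<otimes> A \<Longrightarrow> W Y e R \<bullet> (W L d R \<bullet> r) = ID (L \<otimes> (A \<otimes> R)) \<bullet> r"
  using cx[OF ax_cur, of L R r] by simp
lemma r_Zm: "L \<in> Ob \<Longrightarrow> R \<in> Ob \<Longrightarrow> X \<in> Ob \<Longrightarrow> Y = L \<otimes> X \<Longrightarrow> R1 = A \<otimes> R \<Longrightarrow> L1 = L \<otimes> A \<Longrightarrow>
  W Y m R \<bullet> (W L (sg X) R1 \<bullet> (W L1 (sg X) R \<bullet> r)) = W L (sg X) R \<bullet> (W L m (X \<otimes> R) \<bullet> r)"
  using cx[OF ax_Zm, of X L R r] by simp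
lemma r_Zu: "L \<in> Ob \<Longrightarrow> R \<in> Ob \<Longrightarrow> X \<in> Ob \<Longrightarrow> Y = L \<otimes> X \<Longrightarrow> W Y u R \<bullet> r = W L (sg X) R \<bullet> (W L u (X \<otimes> R) \<bullet> r)"
  using cx[OF ax_Zu, of X L R r] by simp
lemma r_Zu': "L \<in> Ob \<Longrightarrow> R \<in> Ob \<Longrightarrow> X \<in> Ob \<Longrightarrow> R1 = X \<otimes> R \<Longrightarrow> W L (sg X) R \<bullet> (W L u R1 \<bullet> r) = W (L \<otimes> X) u R \<bullet> r"
  using cx[OF ax_Zu, of X L R r] by simp
lemma r_Zd: "L \<in> Ob \<Longrightarrow> R \<in> Ob \<Longrightarrow> X \<in> Ob \<Longrightarrow> Y = L \<otimes> X \<Longrightarrow>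
   W Y d R \<bullet> (W L (sg X) R \<bullet> r) = W L (sg X) (A \<otimes> R) \<bullet> (W (L \<otimes> A) (sg X) R \<bullet> (W L d (X \<otimes> R) \<bullet> r))"
  using cx[OF ax_Zd, of X L R r] by simp
lemma r_Ze: "L \<in> Ob \<Longrightarrow> R \<in> Ob \<Longrightarrow> X \<in> Ob \<Longrightarrow> Y = L \<otimes> X \<Longrightarrow>
   W Y e R \<bullet> (W L (sg X) R \<bullet> r) = W L e (X \<otimes> R) \<bullet> r"
  using cx[OF ax_Ze, of X L R r] by simp
lemma r_nat: "L \<in> Ob \<Longrightarrow> R \<in> Ob \<Longrightarrow> Ar f \<Longrightarrow> R1 = A \<otimes> R \<Longrightarrow> X = dm f \<Longrightarrow>
   W L f R1 \<bullet> (W L (sg X) R \<bullet> r) = W L (sg (cd f)) R \<bullet> (W (L \<otimes> A) f R \<bullet> r)"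
  using cx[OF sg_nat, of f L R r] by simp
lemma r_nat': "L \<in> Ob \<Longrightarrow> R \<in> Ob \<Longrightarrow> Ar f \<Longrightarrow> L1 = L \<otimes> A \<Longrightarrow> Y = cd f \<Longrightarrow>
   W L (sg Y) R \<bullet> (W L1 f R \<bullet> r) = W L f (A \<otimes> R) \<bullet> (W L (sg (dm f)) R \<bullet> r)"
  using cx[OF sg_nat, of f L R r] by simp

definition K :: "('o,'m) ar \<Rightarrow> 'o \<Rightarrow> ('o,'m) ar" where
  "K \<phi> X = W (A \<otimes> X) m I \<bullet> W A (sg X) A \<bullet> W A \<phi> (X \<otimes> A) \<bullet> W I d (X \<otimes> A)"
definition conv :: "('o,'m) ar \<Rightarrow> ('o,'m) ar \<Rightarrow> ('o,'m) ar" where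
  "conv \<phi> \<psi> = W I m I \<bullet> W I \<phi> A \<bullet> W A \<psi> I \<bullet> W I d I"

lemma KK: assumes "Ar \<phi>" "dm \<phi> = A" "cd \<phi> = A" "Ar \<psi>" "dm \<psi> = A" "cd \<psi> = A" "X \<in> Ob"
  shows "K \<phi> X \<bullet> K \<psi> X = K (conv \<phi> \<psi>) X"
proof (rule ctx_eq)
  fix r
  show "(K \<phi> X \<bullet> K \<psi> X) \<bullet> r = K (conv \<phi> \<psi>) X \<bullet> r"
    unfolding K_def conv_def using assms
    by (simp add: swL[where f=d and g=m and M=X] swL[where f=\<phi> and g=m and M=X] swL[where f="sg X" and g=m and M=I]
       r_as swL[where f=d and g="sg X" and M=I] swL[where f=d and g=\<psi> and M=I] r_cas
       swL[where f=\<phi> and g="sg X" and M=I] r_Zm)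
qed (auto simp: K_def conv_def assms)

definition ue :: "('o,'m) ar" where "ue = W I u I \<bullet> W I e I"


lemma ctxR: "P = Q \<Longrightarrow> P \<bullet> r = Q \<bullet> r" by simp

lemma K_unit: "X \<in> Ob \<Longrightarrow> K ue X = ID (A \<otimes> (X \<otimes> A))"
proof (rule ctx_eq)
  fix r assume "X \<in> Ob"
  thus "K ue X \<bullet> r = ID (A \<otimes> (X \<otimes> A)) \<bullet> r"
    unfolding K_def ue_def by (simp add: r_Zu' r_ul r_ur r_cul r_cur)
qed (auto simp: K_def ue_def)

lemma GL1: assumes "Ar S" "dm S = A" "cd S = A" "conv (ID A) S = ue" "conv S (ID A) = ue" "X \<in> Ob"
  shows "K (ID A) X \<bullet> K S X = ID (A \<otimes> (X \<otimes> A))" "K S X \<bullet> K (ID A) X = ID (A \<otimes> (X \<otimes> A))"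
proof -
  have "K (ID A) X \<bullet> K S X = K (conv (ID A) S) X" using assms by (intro KK) auto
  thus "K (ID A) X \<bullet> K S X = ID (A \<otimes> (X \<otimes> A))" using assms K_unit by simp
  have "K S X \<bullet> K (ID A) X = K (conv S (ID A)) X" using assms by (intro KK) auto
  thus "K S X \<bullet> K (ID A) X = ID (A \<otimes> (X \<otimes> A))" using assms K_unit by simp
qed

lemma Kext: assumes "Ar \<phi>" "dm \<phi> = A" "cd \<phi> = A"
  shows "W I e A \<bullet> K \<phi> I \<bullet> W A u I = \<phi>"
proof -
  have "W I e A \<bullet> K \<phi> I \<bullet> W A u I = W I \<phi> I"
  proof (rule ctx_eq)
    fix r show "(W I e A \<bullet> K \<phi> I \<bullet> W A u I) \<bullet> r = W I \<phi> I \<bullet> r"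
      unfolding K_def using assms
      by (simp add: swL[where f=d and g=u and M=I] swL[where f=\<phi> and g=u and M=I] r_ur
         swL[where f=e and g=\<phi> and M=I] r_cul)
  qed (auto simp: K_def assms)
  thus ?thesis using assms by (simp add: W_I1)
qed

lemma eu_swap: "W I e A \<bullet> W A u I = ue"
  unfolding ue_def by (rule ctx_eq) (simp_all add: swL[where f=e and g=u and M=I])

abbreviation "H1 \<equiv> W A m I \<bullet> W I d A"
abbreviation "zt X \<equiv> W I (sg X) A \<bullet> W A (sg X) I"

lemma H1_K: "K (ID A) I = H1" by (simp add: K_def)

lemma H1_lax: "X \<in> Ob \<Longrightarrow> W X H1 I \<bullet> zt X = zt X \<bullet> W I H1 X"
proof (rule ctx_eq)
  fix r assume "X \<in> Ob"
  thus "(W X H1 I \<bullet> zt X) \<bullet> r = (zt X \<bullet> W I H1 X) \<bullet> r"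
    by (simp add: r_Zd swL[where f=d and g="sg X" and M=I] swR[where f="sg X" and g=m and M=I] r_Zm)
qed auto

lemma GL2: assumes G: "Ar G" "dm G = A \<otimes> A" "cd G = A \<otimes> A" "G \<bullet> H1 = ID (A \<otimes> A)" "H1 \<bullet> G = ID (A \<otimes> A)"
  shows "\<exists>S. Ar S \<and> dm S = A \<and> cd S = A \<and> conv (ID A) S = ue \<and> conv S (ID A) = ue
     \<and> (\<forall>X\<in>Ob. W X S I \<bullet> W I (sg X) I = W I (sg X) I \<bullet> W I S X)"
proof -
  have GH: "\<And>r. G \<bullet> (W A m I \<bullet> (W I d A \<bullet> r)) = ID (A \<otimes> A) \<bullet> r" "\<And>r. W A m I \<bullet> (W I d A \<bullet> (G \<bullet> r)) = ID (A \<otimes> A) \<bullet> r"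
    subgoal for r using ctxR[OF G(4), of r] by simp
    subgoal for r using ctxR[OF G(5), of r] by simp
    done
  have e1: "\<And>r. W A m I \<bullet> (W I d A \<bullet> (W A m I \<bullet> r)) = W A m I \<bullet> (W A m A \<bullet> (W I d (A \<otimes> A) \<bullet> r))"
    by (simp add: swL[where f=d and g=m and M=I] r_as)
  have lin: "\<And>r. G \<bullet> (W A m I \<bullet> r) = W A m I \<bullet> (W I G A \<bullet> r)"
  proof -
    fix r
    have "G \<bullet> (W A m I \<bullet> r) = G \<bullet> (W A m I \<bullet> (W I (H1 \<bullet> G) A \<bullet> r))"
      using G by simp
    also have "\<dots> = G \<bullet> (W A m I \<bullet> (W A m A \<bullet> (W I d (A \<otimes> A) \<bullet> (W I G A \<bullet> r))))"
      using G(1-3) by simp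
    also have "\<dots> = G \<bullet> (W A m I \<bullet> (W I d A \<bullet> (W A m I \<bullet> (W I G A \<bullet> r))))" by (simp add: e1)
    also have "\<dots> = W A m I \<bullet> (W I G A \<bullet> r)" by (simp add: GH)
    finally show "G \<bullet> (W A m I \<bullet> r) = W A m I \<bullet> (W I G A \<bullet> r)" .
  qed
  have e2: "\<And>r. W I d A \<bullet> (W A m I \<bullet> (W I d A \<bullet> r)) = W (A \<otimes> A) m I \<bullet> (W A d A \<bullet> (W I d A \<bullet> r))"
    by (simp add: swL[where f=d and g=m and M=I] r_cas)
  have colin: "\<And>r. W I d A \<bullet> (G \<bullet> r) = W A G I \<bullet> (W I d A \<bullet> r)"
  proof -
    fix r
    have "W I d A \<bullet> (G \<bullet> r) = W A (G \<bullet> H1) I \<bullet> (W I d A \<bullet> (G \<bullet> r))"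
      using G by simp
    also have "\<dots> = W A G I \<bullet> (W I d A \<bullet> (W A m I \<bullet> (W I d A \<bullet> (G \<bullet> r))))"
      using G(1-3) by (simp add: e2)
    also have "\<dots> = W A G I \<bullet> (W I d A \<bullet> r)" using G(1-3) by (simp add: GH)
    finally show "W I d A \<bullet> (G \<bullet> r) = W A G I \<bullet> (W I d A \<bullet> r)" .
  qed
  define G' where "G' = G \<bullet> W A u I"
  have G'a: "Ar G'" "dm G' = A" "cd G' = A \<otimes> A" using G unfolding G'_def by auto
  have linG: "\<And>r. G \<bullet> r = W A m I \<bullet> (W I G' A \<bullet> r)"
  proof -
    fix r
    have "G \<bullet> r = G \<bullet> (W A m I \<bullet> (W A u A \<bullet> r))" using G(1-3) by (simp add: r_ul)
    also have "\<dots> = W A m I \<bullet> (W I G' A \<bullet> r)" using G(1-3) by (simp add: lin G'_def)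
    finally show "G \<bullet> r = W A m I \<bullet> (W I G' A \<bullet> r)" .
  qed
  have colin': "\<And>r. W I d A \<bullet> (G' \<bullet> r) = W A G' I \<bullet> (W I d I \<bullet> r)"
    unfolding G'_def using G(1-3) by (simp add: colin swL[where f=d and g=u and M=I])
  define S where "S = W I e A \<bullet> G'"
  have Sa: "Ar S" "dm S = A" "cd S = A" using G'a unfolding S_def by auto
  have G'S: "\<And>r. G' \<bullet> r = W A S I \<bullet> (W I d I \<bullet> r)"
  proof -
    fix r
    have "G' \<bullet> r = W A e A \<bullet> (W I d A \<bullet> (G' \<bullet> r))" using G'a by (simp add: r_cur)
    also have "\<dots> = W A S I \<bullet> (W I d I \<bullet> r)" using G'a by (simp add: colin' S_def)
    finally show "G' \<bullet> r = W A S I \<bullet> (W I d I \<bullet> r)" .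
  qed
  have GK: "G = K S I"
  proof (rule ctx_eq)
    fix r
    have "G \<bullet> r = W A m I \<bullet> (W I G' A \<bullet> r)" by (rule linG)
    also have "\<dots> = W A m I \<bullet> (W I (W A S I \<bullet> W I d I) A \<bullet> r)"
    proof -
      have "G' = W A S I \<bullet> W I d I" using G'S[of "ID A"] G'a Sa by simp
      thus ?thesis by simp
    qed
    also have "\<dots> = K S I \<bullet> r" using Sa by (simp add: K_def)
    finally show "G \<bullet> r = K S I \<bullet> r" .
  qed (use G Sa in \<open>auto simp: K_def\<close>)
  have c1: "conv (ID A) S = ue"
  proof -
    have "K (conv (ID A) S) I = ID (A \<otimes> A)" using KK[of "ID A" S I] Sa G GK H1_K by simp
    hence "conv (ID A) S = W I e A \<bullet> ID (A \<otimes> A) \<bullet> W A u I"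
      using Kext[of "conv (ID A) S"] Sa by (simp add: conv_def)
    also have "\<dots> = ue" by (simp add: eu_swap)
    finally show ?thesis .
  qed
  have c2: "conv S (ID A) = ue"
  proof -
    have "K (conv S (ID A)) I = ID (A \<otimes> A)" using KK[of S "ID A" I] Sa G GK H1_K by simp
    hence "conv S (ID A) = W I e A \<bullet> ID (A \<otimes> A) \<bullet> W A u I"
      using Kext[of "conv S (ID A)"] Sa by (simp add: conv_def)
    also have "\<dots> = ue" by (simp add: eu_swap)
    finally show ?thesis .
  qed
  have Slax: "\<forall>X\<in>Ob. W X S I \<bullet> W I (sg X) I = W I (sg X) I \<bullet> W I S X"
  proof
    fix X assume X: "X \<in> Ob"
    have H1c: "\<And>r. W (X \<otimes> A) m I \<bullet> (W X d A \<bullet> (W I (sg X) A \<bullet> (W A (sg X) I \<bullet> r))) = W I (sg X) A \<bullet> (W A (sg X) I \<bullet> (W A m X \<bullet> (W I d (A \<otimes> X) \<bullet> r)))"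
      subgoal for r using ctxR[OF H1_lax[OF X], of r] X by simp
      done
    have Glax: "\<And>r. W X G I \<bullet> (W I (sg X) A \<bullet> (W A (sg X) I \<bullet> r)) = W I (sg X) A \<bullet> (W A (sg X) I \<bullet> (W I G X \<bullet> r))"
    proof -
      fix r
      have "W X G I \<bullet> (W I (sg X) A \<bullet> (W A (sg X) I \<bullet> r)) = W X G I \<bullet> (zt X \<bullet> (W I (H1 \<bullet> G) X \<bullet> r))"
        using G X by simp
      also have "\<dots> = W X G I \<bullet> (W X H1 I \<bullet> (zt X \<bullet> (W I G X \<bullet> r)))"
        using G(1-3) X by (simp add: H1c)
      also have "\<dots> = W I (sg X) A \<bullet> (W A (sg X) I \<bullet> (W I G X \<bullet> r))"
      proof -
        have "W X G I \<bullet> (W X H1 I \<bullet> q) = ID (X \<otimes> (A \<otimes> A)) \<bullet> q" for q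
          using ctxR[OF arg_cong[OF G(4), of "\<lambda>x. W X x I"], of q] X G(1-3) by simp
        thus ?thesis using X by simp
      qed
      finally show "W X G I \<bullet> (W I (sg X) A \<bullet> (W A (sg X) I \<bullet> r)) = W I (sg X) A \<bullet> (W A (sg X) I \<bullet> (W I G X \<bullet> r))" .
    qed
    show "W X S I \<bullet> W I (sg X) I = W I (sg X) I \<bullet> W I S X"
    proof (rule ctx_eq)
      fix r
      show "(W X S I \<bullet> W I (sg X) I) \<bullet> r = (W I (sg X) I \<bullet> W I S X) \<bullet> r"
        unfolding S_def G'_def using X G(1-3)
        by (simp add: swR[where f="sg X" and g=u and M=I] r_Zu[where L=A and X=X] Glax r_Ze
          swL[where f=e and g="sg X" and M=I])
    qed (use X Sa in auto)
  qed
  show ?thesis using Sa c1 c2 Slax by blast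
qed

end

locale convl = smcl C for C :: "('o,'m) smc" +
  fixes B Ab :: 'o and Ml Ul Dl El :: "('o,'m) ar"
  assumes B_ob[simp]: "B \<in> Ob" and Ab_ob[simp]: "Ab \<in> Ob"
  and Ml_Ar[simp]: "Ar Ml" and Ml_dm[simp]: "dm Ml = Ab \<otimes> Ab" and Ml_cd[simp]: "cd Ml = Ab"
  and Ul_Ar[simp]: "Ar Ul" and Ul_dm[simp]: "dm Ul = I" and Ul_cd[simp]: "cd Ul = Ab"
  and Dl_Ar[simp]: "Ar Dl" and Dl_dm[simp]: "dm Dl = B" and Dl_cd[simp]: "cd Dl = B \<otimes> B"
  and El_Ar[simp]: "Ar El" and El_dm[simp]: "dm El = B" and El_cd[simp]: "cd El = I"
  and cv_as: "W I Ml I \<bullet> W I Ml Ab = W I Ml I \<bullet> W Ab Ml I"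
  and cv_ul: "W I Ml I \<bullet> W I Ul Ab = ID Ab"
  and cv_ur: "W I Ml I \<bullet> W Ab Ul I = ID Ab"
  and cv_cas: "W I Dl B \<bullet> W I Dl I = W B Dl I \<bullet> W I Dl I"
  and cv_cul: "W I El B \<bullet> W I Dl I = ID B"
  and cv_cur: "W B El I \<bullet> W I Dl I = ID B"
begin

lemma cx: "P = Q \<Longrightarrow> W L P R \<bullet> r = W L Q R \<bullet> r" by simp

lemma q_as: "L \<in> Ob \<Longrightarrow> R \<in> Ob \<Longrightarrow> X = Ab \<otimes> R \<Longrightarrow> W L Ml R \<bullet> (W L Ml X \<bullet> r) = W L Ml R \<bullet> (W (L \<otimes> Ab) Ml R \<bullet> r)"
  using cx[OF cv_as, of L R r] by simp
lemma q_ul: "L \<in> Ob \<Longrightarrow> R \<in> Ob \<Longrightarrow> X = Ab \<otimes> R \<Longrightarrow> W L Ml R \<bullet> (W L Ul X \<bullet> r) = ID (L \<otimes> (Ab \<otimes> R)) \<bullet> r"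
  using cx[OF cv_ul, of L R r] by simp
lemma q_ur: "L \<in> Ob \<Longrightarrow> R \<in> Ob \<Longrightarrow> Y = L \<otimes> Ab \<Longrightarrow> W L Ml R \<bullet> (W Y Ul R \<bullet> r) = ID (L \<otimes> (Ab \<otimes> R)) \<bullet> r"
  using cx[OF cv_ur, of L R r] by simp
lemma q_cas: "L \<in> Ob \<Longrightarrow> R \<in> Ob \<Longrightarrow> X = B \<otimes> R \<Longrightarrow> W L Dl X \<bullet> (W L Dl R \<bullet> r) = W (L \<otimes> B) Dl R \<bullet> (W L Dl R \<bullet> r)"
  using cx[OF cv_cas, of L R r] by simp
lemma q_cul: "L \<in> Ob \<Longrightarrow> R \<in> Ob \<Longrightarrow> X = B \<otimes> R \<Longrightarrow> W L El X \<bullet> (W L Dl R \<bullet> r) = ID (L \<otimes> (B \<otimes> R)) \<bullet> r"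
  using cx[OF cv_cul, of L R r] by simp
lemma q_cur: "L \<in> Ob \<Longrightarrow> R \<in> Ob \<Longrightarrow> Y = L \<otimes> B \<Longrightarrow> W Y El R \<bullet> (W L Dl R \<bullet> r) = ID (L \<otimes> (B \<otimes> R)) \<bullet> r"
  using cx[OF cv_cur, of L R r] by simp

definition cv :: "('o,'m) ar \<Rightarrow> ('o,'m) ar \<Rightarrow> ('o,'m) ar" where
  "cv f g = W I Ml I \<bullet> W I f Ab \<bullet> W B g I \<bullet> W I Dl I"

definition "uc = W I Ul I \<bullet> W I El I"

abbreviation "hom f \<equiv> Ar f \<and> dm f = B \<and> cd f = Ab"

lemma cv_hom: "hom f \<Longrightarrow> hom g \<Longrightarrow> hom (cv f g)" by (simp add: cv_def)
lemma uc_hom: "hom uc" by (simp add: uc_def)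

lemma cv_assoc: assumes "hom f" "hom g" "hom h" shows "cv f (cv g h) = cv (cv f g) h"
proof (rule ctx_eq)
  fix r show "cv f (cv g h) \<bullet> r = cv (cv f g) h \<bullet> r"
    unfolding cv_def using assms
    by (simp add: swL[where f=f and g=Ml and M=I] swL[where f=f and g=g and M=I] swL[where f=f and g=h and M=B]
      swL[where f=Dl and g=h and M=I] q_as q_cas)
qed (use assms in \<open>auto simp: cv_def\<close>)

lemma cv_unitr: assumes "hom f" shows "cv f uc = f"
proof -
  have "cv f uc = W I f I"
  proof (rule ctx_eq)
    fix r show "cv f uc \<bullet> r = W I f I \<bullet> r"
      unfolding cv_def uc_def using assms by (simp add: q_cur swL[where f=f and g=Ul and M=I] q_ur)
  qed (use assms in \<open>auto simp: cv_def uc_def\<close>)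
  thus ?thesis using assms by (simp add: W_I1)
qed

lemma cv_unitl: assumes "hom f" shows "cv uc f = f"
proof -
  have "cv uc f = W I f I"
  proof (rule ctx_eq)
    fix r show "cv uc f \<bullet> r = W I f I \<bullet> r"
      unfolding cv_def uc_def using assms by (simp add: swL[where f=El and g=f and M=I] q_cul q_ul)
  qed (use assms in \<open>auto simp: cv_def uc_def\<close>)
  thus ?thesis using assms by (simp add: W_I1)
qed

lemma cv_inv_unique: assumes "hom f" "hom g" "hom h" "cv g f = uc" "cv f h = uc" shows "g = h"
proof -
  have "g = cv g uc" using assms by (simp add: cv_unitr)
  also have "\<dots> = cv g (cv f h)" using assms(5) by simp
  also have "\<dots> = cv (cv g f) h" using assms(1-3) by (intro cv_assoc)
  also have "\<dots> = h" using assms by (simp add: cv_unitl)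
  finally show ?thesis .
qed

end

context galg begin
lemma r_Zm_rev: "L \<in> Ob \<Longrightarrow> R \<in> Ob \<Longrightarrow> X \<in> Ob \<Longrightarrow> Y = X \<otimes> R \<Longrightarrow>
  W L (sg X) R \<bullet> (W L m Y \<bullet> r) = W (L \<otimes> X) m R \<bullet> (W L (sg X) (A \<otimes> R) \<bullet> (W (L \<otimes> A) (sg X) R \<bullet> r))"
  using cx[OF ax_Zm, of X L R r] by simp
lemma r_mon: "L \<in> Ob \<Longrightarrow> R \<in> Ob \<Longrightarrow> Y \<in> Ob \<Longrightarrow> Z \<in> Ob \<Longrightarrow> W L (sg (Y \<otimes> Z)) R = W (L \<otimes> Y) (sg Z) R \<bullet> W L (sg Y) (Z \<otimes> R)"
  by (simp add: sg_mon)
end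

locale balg = galg +
  assumes ax_comp: "W I d I \<bullet> W I m I = W I m A \<bullet> W (A \<otimes> A) m I \<bullet> W A (sg A) A \<bullet> W I d (A \<otimes> A) \<bullet> W A d I"
  and ax_du: "W I d I \<bullet> W I u I = W I u A \<bullet> W I u I"
  and ax_em: "W I e I \<bullet> W I m I = W I e I \<bullet> W A e I"
  and ax_eu: "W I e I \<bullet> W I u I = ID I"
begin

abbreviation "t \<equiv> sg A"
definition "MM = W I m A \<bullet> W (A \<otimes> A) m I \<bullet> W A t A"
definition "UU = W I u A \<bullet> W I u I"

lemma MM_assoc: "W I MM I \<bullet> W I MM (A \<otimes> A) = W I MM I \<bullet> W (A \<otimes> A) MM I"
proof (rule ctx_eq)
  fix r show "(W I MM I \<bullet> W I MM (A \<otimes> A)) \<bullet> r = (W I MM I \<bullet> W (A \<otimes> A) MM I) \<bullet> r"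
    unfolding MM_def
    by (simp add: swR[where f=m and g=t and M=I] r_Zm_rev r_nat'[where f=m] sg_mon[of A A] r_as
      swL[where f=t and g=m and M=I] swL[where f=t and g=m and M=A]
      swR[where f=m and g=m and M=I] swR[where f=m and g=m and M=A] swR[where f=t and g=t and M=I])
qed (auto simp: MM_def)

definition antip where
  "antip S \<longleftrightarrow> Ar S \<and> dm S = A \<and> cd S = A \<and> conv (ID A) S = ue \<and> conv S (ID A) = ue
     \<and> (\<forall>X\<in>Ob. W X S I \<bullet> W I (sg X) I = W I (sg X) I \<bullet> W I S X)"

lemma MM_typ[simp]: "Ar MM" "dm MM = A \<otimes> (A \<otimes> (A \<otimes> A))" "cd MM = A \<otimes> A" by (auto simp: MM_def)
lemma UU_typ[simp]: "Ar UU" "dm UU = I" "cd UU = A \<otimes> A" by (auto simp: UU_def)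

lemma MM_ul: "W I MM I \<bullet> W I UU (A \<otimes> A) = ID (A \<otimes> A)"
proof (rule ctx_eq)
  fix r show "(W I MM I \<bullet> W I UU (A \<otimes> A)) \<bullet> r = ID (A \<otimes> A) \<bullet> r"
    unfolding MM_def UU_def by (simp add: swR[where f=u and g=t and M=I] r_Zu' swR[where f=u and g=m and M=A] r_ul)
qed (auto simp: MM_def UU_def)

lemma MM_ur: "W I MM I \<bullet> W (A \<otimes> A) UU I = ID (A \<otimes> A)"
proof (rule ctx_eq)
  fix r show "(W I MM I \<bullet> W (A \<otimes> A) UU I) \<bullet> r = ID (A \<otimes> A) \<bullet> r"
    unfolding MM_def UU_def by (simp add: r_nat'[where f=u] swR[where f=u and g=m and M=I] r_ur)
qed (auto simp: MM_def UU_def)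

sublocale Q: convl C A "A \<otimes> A" MM UU d e
  by unfold_locales (simp_all add: MM_assoc MM_ul MM_ur ax_cas ax_cul ax_cur)

lemma cx2: "P = Q \<Longrightarrow> W L P R \<bullet> r = W L Q R \<bullet> r" by simp

lemma r_compR: "L \<in> Ob \<Longrightarrow> R \<in> Ob \<Longrightarrow> X1 = A \<otimes> R \<Longrightarrow> Y2 = L \<otimes> (A \<otimes> A) \<Longrightarrow> Y3 = L \<otimes> A \<Longrightarrow> X3 = A \<otimes> R
  \<Longrightarrow> X4 = A \<otimes> (A \<otimes> R) \<Longrightarrow> Y5 = L \<otimes> A \<Longrightarrow>
  W L m X1 \<bullet> (W Y2 m R \<bullet> (W Y3 t X3 \<bullet> (W L d X4 \<bullet> (W Y5 d R \<bullet> r)))) = W L d R \<bullet> (W L m R \<bullet> r)"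
  using cx2[OF ax_comp, of L R r] by simp
lemma r_du: "L \<in> Ob \<Longrightarrow> R \<in> Ob \<Longrightarrow> W L d R \<bullet> (W L u R \<bullet> r) = W L u (A \<otimes> R) \<bullet> (W L u R \<bullet> r)"
  using cx2[OF ax_du, of L R r] by simp
lemma r_em: "L \<in> Ob \<Longrightarrow> R \<in> Ob \<Longrightarrow> W L e R \<bullet> (W L m R \<bullet> r) = W L e R \<bullet> (W (L \<otimes> A) e R \<bullet> r)"
  using cx2[OF ax_em, of L R r] by simp
lemma r_eu: "L \<in> Ob \<Longrightarrow> R \<in> Ob \<Longrightarrow> W L e R \<bullet> (W L u R \<bullet> r) = ID (L \<otimes> R) \<bullet> r"
  using cx2[OF ax_eu, of L R r] by simp

lemma antipD: assumes "antip S"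
  shows "Ar S" "dm S = A" "cd S = A"
  "\<And>L R Y r. L \<in> Ob \<Longrightarrow> R \<in> Ob \<Longrightarrow> Y = L \<otimes> A \<Longrightarrow> W L m R \<bullet> (W Y S R \<bullet> (W L d R \<bullet> r)) = W L u R \<bullet> (W L e R \<bullet> r)"
  "\<And>L R X r. L \<in> Ob \<Longrightarrow> R \<in> Ob \<Longrightarrow> X = A \<otimes> R \<Longrightarrow> W L m R \<bullet> (W L S X \<bullet> (W L d R \<bullet> r)) = W L u R \<bullet> (W L e R \<bullet> r)"
  "\<And>L R Z X r. L \<in> Ob \<Longrightarrow> R \<in> Ob \<Longrightarrow> Z \<in> Ob \<Longrightarrow> X = Z \<otimes> R \<Longrightarrow> W L (sg Z) R \<bullet> (W L S X \<bullet> r) = W (L \<otimes> Z) S R \<bullet> (W L (sg Z) R \<bullet> r)"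
proof -
  have a: "Ar S" "dm S = A" "cd S = A" "conv (ID A) S = ue" "conv S (ID A) = ue"
    "\<And>X. X \<in> Ob \<Longrightarrow> W X S I \<bullet> W I (sg X) I = W I (sg X) I \<bullet> W I S X"
    using assms unfolding antip_def by auto
  show "Ar S" "dm S = A" "cd S = A" using a by auto
  show "\<And>L R Y r. L \<in> Ob \<Longrightarrow> R \<in> Ob \<Longrightarrow> Y = L \<otimes> A \<Longrightarrow> W L m R \<bullet> (W Y S R \<bullet> (W L d R \<bullet> r)) = W L u R \<bullet> (W L e R \<bullet> r)"
    subgoal for L R Y r using cx2[OF a(4), of L R r] a by (simp add: conv_def ue_def) done
  show "\<And>L R X r. L \<in> Ob \<Longrightarrow> R \<in> Ob \<Longrightarrow> X = A \<otimes> R \<Longrightarrow> W L m R \<bullet> (W L S X \<bullet> (W L d R \<bullet> r)) = W L u R \<bullet> (W L e R \<bullet> r)"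
    subgoal for L R X r using cx2[OF a(5), of L R r] a by (simp add: conv_def ue_def) done
  show "\<And>L R Z X r. L \<in> Ob \<Longrightarrow> R \<in> Ob \<Longrightarrow> Z \<in> Ob \<Longrightarrow> X = Z \<otimes> R \<Longrightarrow> W L (sg Z) R \<bullet> (W L S X \<bullet> r) = W (L \<otimes> Z) S R \<bullet> (W L (sg Z) R \<bullet> r)"
    subgoal for L R Z X r using cx2[OF a(6)[of Z], of L R r] a(1-3) by simp done
qed

lemma r_fold: "L \<in> Ob \<Longrightarrow> R \<in> Ob \<Longrightarrow> Yo \<in> Ob \<Longrightarrow> Z \<in> Ob \<Longrightarrow> Y = L \<otimes> Yo \<Longrightarrow> X = Z \<otimes> R \<Longrightarrow>
   W Y (sg Z) R \<bullet> (W L (sg Yo) X \<bullet> r) = W L (sg (Yo \<otimes> Z)) R \<bullet> r"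
  by (simp add: sg_mon)

lemma anti_comult: assumes S: "antip S"
  shows "W I d I \<bullet> W I S I = W I S A \<bullet> W A S I \<bullet> W I t I \<bullet> W I d I"
proof -
  note SD = antipD[OF S]
  have natf: "\<And>L R r. L \<in> Ob \<Longrightarrow> R \<in> Ob \<Longrightarrow> W L m (A \<otimes> R) \<bullet> (W L S (A \<otimes> (A \<otimes> R)) \<bullet> (W L (sg (A \<otimes> A)) R \<bullet> r))
      = W L t R \<bullet> (W (L \<otimes> A) m R \<bullet> (W (L \<otimes> A) S (A \<otimes> R) \<bullet> r))"
  proof -
    fix L R r assume o: "L \<in> Ob" "R \<in> Ob"
    have "W I (W I m I \<bullet> W I S A) A \<bullet> W I (sg (dm (W I m I \<bullet> W I S A))) I = W I (sg (cd (W I m I \<bullet> W I S A))) I \<bullet> W A (W I m I \<bullet> W I S A) I"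
      by (rule sg_nat) (use SD in simp)
    from cx2[OF this, of L R r] show "?thesis L R r" using o SD by simp
  qed
  let ?R = "W I S A \<bullet> W A S I \<bullet> W I t I \<bullet> W I d I"
  have hR: "Q.hom ?R" using SD by simp
  have hd: "Q.hom (W I d I)" by simp
  have hdS: "Q.hom (W I d I \<bullet> W I S I)" using SD by simp
  have a: "Q.cv (W I d I) (W I d I \<bullet> W I S I) = Q.uc"
  proof (rule ctx_eq)
    fix r show "Q.cv (W I d I) (W I d I \<bullet> W I S I) \<bullet> r = Q.uc \<bullet> r"
      unfolding Q.cv_def Q.uc_def unfolding MM_def UU_def using SD by (simp add: r_compR SD(4) r_du)
  qed (use SD in \<open>auto simp: Q.cv_def Q.uc_def\<close>)
  have b: "Q.cv ?R (W I d I) = Q.uc"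
  proof (rule ctx_eq)
    fix r show "Q.cv ?R (W I d I) \<bullet> r = Q.uc \<bullet> r"
      unfolding Q.cv_def Q.uc_def unfolding MM_def UU_def using SD
      by (simp add: swR[where f=S and g=t and M=I] SD(6) r_fold[where Yo=A and Z=A]
        swL[where f=S and g=S and L=I and M=A] swL[where f=m and g=m and L=I and M=I]
        swL[where f=m and g=S and M=I] natf swL[where f=d and g=d and L=I and M=I] r_cas[where L=I]
        r_cas'[where L=A] SD(5) r_cul r_nat'[where f=u] swR[where f=u and g=S and M=I] swR[where f=u and g=m and M=I])
  qed (use SD in \<open>auto simp: Q.cv_def Q.uc_def\<close>)
  have "?R = W I d I \<bullet> W I S I" using Q.cv_inv_unique[OF hd hR hdS b a] .
  thus ?thesis by simp
qed

definition "DD = W A t A \<bullet> W I d (A \<otimes> A) \<bullet> W A d I"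
definition "EE = W I e I \<bullet> W A e I"
lemma DD_typ[simp]: "Ar DD" "dm DD = A \<otimes> A" "cd DD = A \<otimes> (A \<otimes> (A \<otimes> A))" by (auto simp: DD_def)
lemma EE_typ[simp]: "Ar EE" "dm EE = A \<otimes> A" "cd EE = I" by (auto simp: EE_def)

lemma DD_cas: "W I DD (A \<otimes> A) \<bullet> W I DD I = W (A \<otimes> A) DD I \<bullet> W I DD I"
proof (rule ctx_eq)
  fix r show "(W I DD (A \<otimes> A) \<bullet> W I DD I) \<bullet> r = (W (A \<otimes> A) DD I \<bullet> W I DD I) \<bullet> r"
    unfolding DD_def
    by (simp add: r_Zd r_nat[where f=d] sg_mon[of A A] r_cas
      swL[where f=d and g=t and M=I] swL[where f=d and g=t and M=A]
      swR[where f=t and g=d and M=I] swR[where f=t and g=d and M=A]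
      swL[where f=d and g=d and M=I] swL[where f=d and g=d and M=A] swR[where f=t and g=t and M=I])
qed (auto simp: DD_def)

lemma DD_cul: "W I EE (A \<otimes> A) \<bullet> W I DD I = ID (A \<otimes> A)"
proof (rule ctx_eq)
  fix r show "(W I EE (A \<otimes> A) \<bullet> W I DD I) \<bullet> r = ID (A \<otimes> A) \<bullet> r"
    unfolding DD_def EE_def by (simp add: r_nat[where f=e] swR[where f=d and g=e and M=I] r_cul r_cur)
qed (auto simp: DD_def EE_def)

lemma DD_cur: "W (A \<otimes> A) EE I \<bullet> W I DD I = ID (A \<otimes> A)"
proof (rule ctx_eq)
  fix r show "(W (A \<otimes> A) EE I \<bullet> W I DD I) \<bullet> r = ID (A \<otimes> A) \<bullet> r"
    unfolding DD_def EE_def by (simp add: swR[where f=t and g=e and M=I] r_Ze swR[where f=d and g=e and M=A] r_cul r_cur)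
qed (auto simp: DD_def EE_def)

sublocale P: convl C "A \<otimes> A" A m u DD EE
  by unfold_locales (simp_all add: DD_cas DD_cul DD_cur ax_as ax_ul ax_ur)

lemma r_asR: "L \<in> Ob \<Longrightarrow> R \<in> Ob \<Longrightarrow> X = A \<otimes> R \<Longrightarrow> W L m R \<bullet> (W L m X \<bullet> r) = W L m R \<bullet> (W (L \<otimes> A) m R \<bullet> r)"
  using cx2[OF ax_as, of L R r] by simp

lemma anti_mult: assumes S: "antip S"
  shows "W I S I \<bullet> W I m I = W I m I \<bullet> W I t I \<bullet> W I S A \<bullet> W A S I"
proof -
  note SD = antipD[OF S]
  have natf: "\<And>L R r X1 Y2. L \<in> Ob \<Longrightarrow> R \<in> Ob \<Longrightarrow> X1 = A \<otimes> R \<Longrightarrow> Y2 = L \<otimes> A \<Longrightarrow> W L m X1 \<bullet> (W Y2 S X1 \<bullet> (W L (sg (A \<otimes> A)) R \<bullet> r))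
      = W L t R \<bullet> (W (L \<otimes> A) m R \<bullet> (W (L \<otimes> (A \<otimes> A)) S R \<bullet> r))"
  proof -
    fix L R r X1 Y2 assume o: "L \<in> Ob" "R \<in> Ob" "X1 = A \<otimes> R" "Y2 = L \<otimes> A"
    have "W I (W I m I \<bullet> W A S I) A \<bullet> W I (sg (dm (W I m I \<bullet> W A S I))) I = W I (sg (cd (W I m I \<bullet> W A S I))) I \<bullet> W A (W I m I \<bullet> W A S I) I"
      by (rule sg_nat) (use SD in simp)
    from cx2[OF this, of L R r] show "?thesis L R r X1 Y2" using o SD by simp
  qed
  let ?R = "W I m I \<bullet> W I t I \<bullet> W I S A \<bullet> W A S I"
  have hR: "P.hom ?R" using SD by simp
  have hm: "P.hom (W I m I)" by simp
  have hSm: "P.hom (W I S I \<bullet> W I m I)" using SD by simp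
  have a: "P.cv (W I S I \<bullet> W I m I) (W I m I) = P.uc"
  proof (rule ctx_eq)
    fix r show "P.cv (W I S I \<bullet> W I m I) (W I m I) \<bullet> r = P.uc \<bullet> r"
      unfolding P.cv_def P.uc_def unfolding DD_def EE_def using SD by (simp add: r_compR SD(4) SD(5) r_em)
  qed (use SD in \<open>auto simp: P.cv_def P.uc_def\<close>)
  have b: "P.cv (W I m I) ?R = P.uc"
  proof (rule ctx_eq)
    fix r show "P.cv (W I m I) ?R \<bullet> r = P.uc \<bullet> r"
      unfolding P.cv_def P.uc_def unfolding DD_def EE_def using SD
      by (simp add: SD(6) r_nat'[where f=S] r_fold[where Yo=A and Z=A] r_asR[where L=I] r_as[where L=A]
        swL[where f=m and g=S and M=I] natf swR[where f=d and g=S and M=A] swR[where f=d and g=m and M=I]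
        SD(4) SD(5) swL[where f=d and g=u and M=I] r_nat'[where f=u] swR[where f=u and g=S and M=I] r_ul)
  qed (use SD in \<open>auto simp: P.cv_def P.uc_def\<close>)
  have "W I S I \<bullet> W I m I = ?R" using P.cv_inv_unique[OF hm hSm hR a b] .
  thus ?thesis by simp
qed

lemma eS: assumes "antip S" shows "W I e I \<bullet> W I S I = W I e I"
proof -
  note SD = antipD[OF assms]
  have "W I e I \<bullet> W I S I = W I e I \<bullet> conv S (ID A)"
  proof (rule ctx_eq)
    fix r show "(W I e I \<bullet> W I S I) \<bullet> r = (W I e I \<bullet> conv S (ID A)) \<bullet> r"
      unfolding conv_def using SD by (simp add: r_em swR[where f=S and g=e and M=I] r_cur)
  qed (use SD in \<open>auto simp: conv_def\<close>)
  also have "\<dots> = W I e I" using assms ax_eu by (simp add: antip_def ue_def cp_assoc[symmetric] del: cp_assoc)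
  finally show ?thesis .
qed

lemma Su: assumes "antip S" shows "W I S I \<bullet> W I u I = W I u I"
proof -
  note SD = antipD[OF assms]
  have "W I S I \<bullet> W I u I = conv S (ID A) \<bullet> W I u I"
  proof (rule ctx_eq)
    fix r show "(W I S I \<bullet> W I u I) \<bullet> r = (conv S (ID A) \<bullet> W I u I) \<bullet> r"
      unfolding conv_def using SD by (simp add: r_du swL[where f=u and g=u and L=I and M=I] swL[where f=S and g=u and M=I] r_ur)
  qed (use SD in \<open>auto simp: conv_def\<close>)
  also have "\<dots> = W I u I" using assms ax_eu by (simp add: antip_def ue_def)
  finally show ?thesis .
qed

end

locale binv = balg +
  fixes ti
  assumes ti_Ar[simp]: "Ar ti" and ti_dm[simp]: "dm ti = A \<otimes> A" and ti_cd[simp]: "cd ti = A \<otimes> A"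
  and ti_l: "W I ti I \<bullet> W I t I = ID (A \<otimes> A)" and ti_r: "W I t I \<bullet> W I ti I = ID (A \<otimes> A)"
begin

lemma r_tit: "L \<in> Ob \<Longrightarrow> R \<in> Ob \<Longrightarrow> W L ti R \<bullet> (W L t R \<bullet> r) = ID (L \<otimes> (A \<otimes> (A \<otimes> R))) \<bullet> r"
  using cx2[OF ti_l, of L R r] by simp
lemma r_tti: "L \<in> Ob \<Longrightarrow> R \<in> Ob \<Longrightarrow> W L t R \<bullet> (W L ti R \<bullet> r) = ID (L \<otimes> (A \<otimes> (A \<otimes> R))) \<bullet> r"
  using cx2[OF ti_r, of L R r] by simp

lemma conj_ti: assumes "Ar P" "dm P = A \<otimes> A" "cd P = A \<otimes> A" "Ar Q" "dm Q = A \<otimes> A" "cd Q = A \<otimes> A"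
  and "P \<bullet> W I t I = W I t I \<bullet> Q" shows "W I ti I \<bullet> P = Q \<bullet> W I ti I"
proof -
  have "W I ti I \<bullet> P = W I ti I \<bullet> P \<bullet> W I t I \<bullet> W I ti I" using assms ti_r by (simp add: cp_assoc[symmetric] del: cp_assoc)
  also have "\<dots> = W I ti I \<bullet> W I t I \<bullet> Q \<bullet> W I ti I" using assms(7) by (metis cp_assoc)
  also have "\<dots> = Q \<bullet> W I ti I" using assms ti_l by (simp add: cp_assoc[symmetric] del: cp_assoc)
  finally show ?thesis .
qed

lemma ti_natX: assumes "Ar f" "dm f = A" "cd f = A"
  shows "W I ti I \<bullet> W I f A = W A f I \<bullet> W I ti I"
  using assms sg_nat[of f] by (intro conj_ti) (auto simp: W_I1)

lemma ti_natM: assumes "Ar f" "dm f = A" "cd f = A" "W A f I \<bullet> W I t I = W I t I \<bullet> W I f A"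
  shows "W I ti I \<bullet> W A f I = W I f A \<bullet> W I ti I"
  using assms by (intro conj_ti) auto

lemma Slax_A: "antip S \<Longrightarrow> W A S I \<bullet> W I t I = W I t I \<bullet> W I S A"
  unfolding antip_def by auto

lemma C2: assumes S: "antip S" and Si: "Ar Si" "dm Si = A" "cd Si = A" "S \<bullet> Si = ID A" "Si \<bullet> S = ID A"
  shows "W I m I \<bullet> W I ti I \<bullet> W I Si A \<bullet> W I d I = ue" "W I m I \<bullet> W I ti I \<bullet> W A Si I \<bullet> W I d I = ue"
    "\<forall>X\<in>Ob. W X Si I \<bullet> W I (sg X) I = W I (sg X) I \<bullet> W I Si X"
proof -
  note SD = antipD[OF S]
  have ac: "\<And>L R r. L \<in> Ob \<Longrightarrow> R \<in> Ob \<Longrightarrow> W L d R \<bullet> (W L S R \<bullet> r) = W L S (A \<otimes> R) \<bullet> (W (L \<otimes> A) S R \<bullet> (W L t R \<bullet> (W L d R \<bullet> r)))"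
    subgoal for L R r using cx2[OF anti_comult[OF S], of L R r] SD by simp done
  have es: "\<And>L R r. L \<in> Ob \<Longrightarrow> R \<in> Ob \<Longrightarrow> W L e R \<bullet> (W L S R \<bullet> r) = W L e R \<bullet> r"
    subgoal for L R r using cx2[OF eS[OF S], of L R r] SD by simp done
  have SiS: "\<And>L R r. L \<in> Ob \<Longrightarrow> R \<in> Ob \<Longrightarrow> W L Si R \<bullet> (W L S R \<bullet> r) = ID (L \<otimes> (A \<otimes> R)) \<bullet> r"
    subgoal for L R r using cx2[OF Si(5), of L R r] SD Si(1-3) by simp done
  have SSi: "\<And>L R r. L \<in> Ob \<Longrightarrow> R \<in> Ob \<Longrightarrow> W L S R \<bullet> (W L Si R \<bullet> r) = ID (L \<otimes> (A \<otimes> R)) \<bullet> r"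
    subgoal for L R r using cx2[OF Si(4), of L R r] SD Si(1-3) by simp done
  have n1: "\<And>r. W I ti I \<bullet> (W I S A \<bullet> r) = W A S I \<bullet> (W I ti I \<bullet> r)"
    subgoal for r using ctxR[OF ti_natX[of S], of r] SD by simp done
  have n2: "\<And>r. W I ti I \<bullet> (W A S I \<bullet> r) = W I S A \<bullet> (W I ti I \<bullet> r)"
    subgoal for r using ctxR[OF ti_natM[of S], of r] SD Slax_A[OF S] by simp done
  have key: "\<And>P. Ar P \<Longrightarrow> dm P = A \<Longrightarrow> cd P = A \<Longrightarrow> P \<bullet> W I S I = ue \<bullet> W I S I \<Longrightarrow> P = ue"
  proof -
    fix P assume P: "Ar P" "dm P = A" "cd P = A" "P \<bullet> W I S I = ue \<bullet> W I S I"
    have "P = P \<bullet> (S \<bullet> Si)" using P Si by simp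
    also have "\<dots> = (P \<bullet> W I S I) \<bullet> Si" using SD by (simp add: W_I1)
    also have "\<dots> = (ue \<bullet> W I S I) \<bullet> Si" using P by simp
    also have "\<dots> = ue" using SD Si by (simp add: W_I1 cp_assoc[symmetric] del: cp_assoc) (simp add: ue_def)
    finally show "P = ue" .
  qed
  show "W I m I \<bullet> W I ti I \<bullet> W I Si A \<bullet> W I d I = ue"
  proof (rule key)
    show "(W I m I \<bullet> W I ti I \<bullet> W I Si A \<bullet> W I d I) \<bullet> W I S I = ue \<bullet> W I S I"
    proof (rule ctx_eq)
      fix r show "((W I m I \<bullet> W I ti I \<bullet> W I Si A \<bullet> W I d I) \<bullet> W I S I) \<bullet> r = (ue \<bullet> W I S I) \<bullet> r"
        unfolding ue_def using SD Si by (simp add: ac SiS n2 r_tit SD(5) es)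
    qed (use SD Si in \<open>auto simp: ue_def\<close>)
  qed (use Si in auto)
  show "W I m I \<bullet> W I ti I \<bullet> W A Si I \<bullet> W I d I = ue"
  proof (rule key)
    show "(W I m I \<bullet> W I ti I \<bullet> W A Si I \<bullet> W I d I) \<bullet> W I S I = ue \<bullet> W I S I"
    proof (rule ctx_eq)
      fix r show "((W I m I \<bullet> W I ti I \<bullet> W A Si I \<bullet> W I d I) \<bullet> W I S I) \<bullet> r = (ue \<bullet> W I S I) \<bullet> r"
        unfolding ue_def using SD Si by (simp add: ac swR[where f=S and g=Si and M=I] SiS n1 r_tit SD(4) es)
    qed (use SD Si in \<open>auto simp: ue_def\<close>)
  qed (use Si in auto)
  show "\<forall>X\<in>Ob. W X Si I \<bullet> W I (sg X) I = W I (sg X) I \<bullet> W I Si X"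
  proof
    fix X assume X: "X \<in> Ob"
    have l: "W X S I \<bullet> W I (sg X) I = W I (sg X) I \<bullet> W I S X" using S X unfolding antip_def by auto
    have lc: "\<And>q. W I (sg X) I \<bullet> (W I S X \<bullet> q) = W X S I \<bullet> (W I (sg X) I \<bullet> q)"
      subgoal for q using ctxR[OF l[symmetric], of q] X SD(1-3) by simp done
    show "W X Si I \<bullet> W I (sg X) I = W I (sg X) I \<bullet> W I Si X"
    proof (rule ctx_eq)
      fix r
      have "(W X Si I \<bullet> W I (sg X) I) \<bullet> r = W X Si I \<bullet> (W I (sg X) I \<bullet> (W I S X \<bullet> (W I Si X \<bullet> r)))"
        using X Si(1-3) SD by (simp add: SSi)
      also have "\<dots> = W X Si I \<bullet> (W X S I \<bullet> (W I (sg X) I \<bullet> (W I Si X \<bullet> r)))" by (simp add: lc)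
      also have "\<dots> = (W I (sg X) I \<bullet> W I Si X) \<bullet> r" using X Si(1-3) SD by (simp add: SiS)
      finally show "(W X Si I \<bullet> W I (sg X) I) \<bullet> r = (W I (sg X) I \<bullet> W I Si X) \<bullet> r" .
    qed (use X Si in auto)
  qed
qed

sublocale E: convl C A A m u d e
  by unfold_locales (simp_all add: ax_as ax_ul ax_ur ax_cas ax_cul ax_cur)

lemma E_cv: "E.cv f g = conv f g" by (simp add: E.cv_def conv_def)
lemma E_uc: "E.uc = ue" by (simp add: E.uc_def ue_def)

lemma C1: assumes S: "antip S" and S': "Ar S'" "dm S' = A" "cd S' = A"
  and E1: "W I m I \<bullet> W I ti I \<bullet> W I S' A \<bullet> W I d I = ue" and E2: "W I m I \<bullet> W I ti I \<bullet> W A S' I \<bullet> W I d I = ue"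
  shows "S \<bullet> S' = ID A" "S' \<bullet> S = ID A"
proof -
  note SD = antipD[OF S]
  have ac: "\<And>L R r. L \<in> Ob \<Longrightarrow> R \<in> Ob \<Longrightarrow> W L d R \<bullet> (W L S R \<bullet> r) = W L S (A \<otimes> R) \<bullet> (W (L \<otimes> A) S R \<bullet> (W L t R \<bullet> (W L d R \<bullet> r)))"
    subgoal for L R r using cx2[OF anti_comult[OF S], of L R r] SD(1-3) by simp done
  have am: "\<And>L R r. L \<in> Ob \<Longrightarrow> R \<in> Ob \<Longrightarrow> W L S R \<bullet> (W L m R \<bullet> r) = W L m R \<bullet> (W L t R \<bullet> (W L S (A \<otimes> R) \<bullet> (W (L \<otimes> A) S R \<bullet> r)))"
    subgoal for L R r using cx2[OF anti_mult[OF S], of L R r] SD(1-3) by simp done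
  have n1S: "\<And>r. W I ti I \<bullet> (W I S A \<bullet> r) = W A S I \<bullet> (W I ti I \<bullet> r)"
    subgoal for r using ctxR[OF ti_natX[of S], of r] SD(1-3) by simp done
  have n1S': "\<And>r. W I ti I \<bullet> (W I S' A \<bullet> r) = W A S' I \<bullet> (W I ti I \<bullet> r)"
    subgoal for r using ctxR[OF ti_natX[of S'], of r] S' by simp done
  have n2S: "\<And>r. W I ti I \<bullet> (W A S I \<bullet> r) = W I S A \<bullet> (W I ti I \<bullet> r)"
    subgoal for r using ctxR[OF ti_natM[of S], of r] SD(1-3) Slax_A[OF S] by simp done
  have n1r: "\<And>r. W A S I \<bullet> (W I ti I \<bullet> r) = W I ti I \<bullet> (W I S A \<bullet> r)" using n1S by simp
  have n2r: "\<And>r. W I S A \<bullet> (W I ti I \<bullet> r) = W I ti I \<bullet> (W A S I \<bullet> r)" using n2S by simp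
  have hS: "E.hom S" "E.hom (ID A)" "E.hom (S' \<bullet> S)" "E.hom (S \<bullet> S')" using SD S' by auto
  have c1: "conv S (S' \<bullet> S) = ue"
  proof -
    have "(W I m I \<bullet> W I ti I \<bullet> W I S' A \<bullet> W I d I) \<bullet> W I S I = conv S (S' \<bullet> S)"
    proof (rule ctx_eq)
      fix r show "((W I m I \<bullet> W I ti I \<bullet> W I S' A \<bullet> W I d I) \<bullet> W I S I) \<bullet> r = conv S (S' \<bullet> S) \<bullet> r"
        unfolding conv_def using SD(1-3) S' by (simp add: ac n1S n1S' n2S r_tit swR[where f=S and g=S and L=I and M=I]
          swR[where f=S and g=S' and M=I])
    qed (use SD S' in \<open>auto simp: conv_def\<close>)
    moreover have "ue \<bullet> W I S I = ue" using eS[OF S] SD(1-3) by (simp add: ue_def)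
    ultimately show ?thesis using E1 by simp
  qed
  have c2: "conv (S \<bullet> S') S = ue"
  proof -
    have "W I S I \<bullet> (W I m I \<bullet> W I ti I \<bullet> W I S' A \<bullet> W I d I) = conv (S \<bullet> S') S"
    proof (rule ctx_eq)
      fix r show "(W I S I \<bullet> (W I m I \<bullet> W I ti I \<bullet> W I S' A \<bullet> W I d I)) \<bullet> r = conv (S \<bullet> S') S \<bullet> r"
        unfolding conv_def using SD(1-3) S' by (simp add: am n1r n2r r_tti swR[where f=S and g=S and L=I and M=I]
          swR[where f=S' and g=S and M=I])
    qed (use SD S' in \<open>auto simp: conv_def\<close>)
    moreover have "W I S I \<bullet> ue = ue" using Su[OF S] SD(1-3) by (simp add: ue_def cp_assoc[symmetric] del: cp_assoc)
    ultimately show ?thesis using E1 by simp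
  qed
  have cS: "conv (ID A) S = ue" "conv S (ID A) = ue" using S by (simp_all add: antip_def)
  have "ID A = S' \<bullet> S" using E.cv_inv_unique[OF hS(1) hS(2) hS(3)] c1 cS by (simp add: E_cv E_uc)
  thus "S' \<bullet> S = ID A" by simp
  show "S \<bullet> S' = ID A" using E.cv_inv_unique[OF hS(1) hS(4) hS(2)] c2 cS by (simp add: E_cv E_uc)
qed

lemma t_lax: "X \<in> Ob \<Longrightarrow> W X t I \<bullet> W I (sg X) A \<bullet> W A (sg X) I = W I (sg X) A \<bullet> W A (sg X) I \<bullet> W I t X"
proof (rule ctx_eq)
  fix r assume X: "X \<in> Ob"
  thus "(W X t I \<bullet> W I (sg X) A \<bullet> W A (sg X) I) \<bullet> r = (W I (sg X) A \<bullet> W A (sg X) I \<bullet> W I t X) \<bullet> r"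
    by (simp add: r_fold[where Yo=A and Z=X] r_nat[where f="sg X"] sg_mon[of X A])
qed auto

lemma ti_lax: assumes X: "X \<in> Ob" shows "\<And>r. W X ti I \<bullet> (W I (sg X) A \<bullet> (W A (sg X) I \<bullet> r)) = W I (sg X) A \<bullet> (W A (sg X) I \<bullet> (W I ti X \<bullet> r))"
proof -
  fix r
  have tl: "\<And>q. W X t I \<bullet> (W I (sg X) A \<bullet> (W A (sg X) I \<bullet> q)) = W I (sg X) A \<bullet> (W A (sg X) I \<bullet> (W I t X \<bullet> q))"
    subgoal for q using ctxR[OF t_lax[OF X], of q] X by simp done
  have "W X ti I \<bullet> (W I (sg X) A \<bullet> (W A (sg X) I \<bullet> r)) = W X ti I \<bullet> (W I (sg X) A \<bullet> (W A (sg X) I \<bullet> (W I t X \<bullet> (W I ti X \<bullet> r))))"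
    using X by (simp add: r_tti)
  also have "\<dots> = W X ti I \<bullet> (W X t I \<bullet> (W I (sg X) A \<bullet> (W A (sg X) I \<bullet> (W I ti X \<bullet> r))))" by (simp add: tl)
  also have "\<dots> = W I (sg X) A \<bullet> (W A (sg X) I \<bullet> (W I ti X \<bullet> r))" using X by (simp add: r_tit)
  finally show "?thesis r" .
qed

lemma F2: "\<And>r. W I d A \<bullet> (W I ti I \<bullet> r) = W A ti I \<bullet> (W I ti A \<bullet> (W A d I \<bullet> r))"
proof -
  fix r
  have "W I d A \<bullet> (W I ti I \<bullet> r) = W A ti I \<bullet> (W I ti A \<bullet> (W I t A \<bullet> (W A t I \<bullet> (W I d A \<bullet> (W I ti I \<bullet> r)))))"
    by (simp add: r_tit)
  also have "\<dots> = W A ti I \<bullet> (W I ti A \<bullet> (W A d I \<bullet> (W I t I \<bullet> (W I ti I \<bullet> r))))" by (simp add: r_Zd)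
  also have "\<dots> = W A ti I \<bullet> (W I ti A \<bullet> (W A d I \<bullet> r))" by (simp add: r_tti)
  finally show "?thesis r" .
qed

lemma F1: "\<And>r. W A d I \<bullet> (W I ti I \<bullet> r) = W I ti A \<bullet> (W A ti I \<bullet> (W I d A \<bullet> r))"
proof -
  fix r
  have "W A d I \<bullet> (W I ti I \<bullet> r) = W I ti A \<bullet> (W A ti I \<bullet> (W A t I \<bullet> (W I t A \<bullet> (W A d I \<bullet> (W I ti I \<bullet> r)))))"
    by (simp add: r_tit)
  also have "\<dots> = W I ti A \<bullet> (W A ti I \<bullet> (W I d A \<bullet> (W I t I \<bullet> (W I ti I \<bullet> r))))" by (simp add: r_nat[where f=d] sg_mon[of A A])
  also have "\<dots> = W I ti A \<bullet> (W A ti I \<bullet> (W I d A \<bullet> r))" by (simp add: r_tti)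
  finally show "?thesis r" .
qed

lemma YB: "\<And>r. W I t A \<bullet> (W A t I \<bullet> (W I t A \<bullet> r)) = W A t I \<bullet> (W I t A \<bullet> (W A t I \<bullet> r))"
  subgoal for r using cx2[OF sg_nat[of t], of I I r] by (simp add: sg_mon[of A A]) done

lemma YB': "\<And>r. W I ti A \<bullet> (W A ti I \<bullet> (W I ti A \<bullet> r)) = W A ti I \<bullet> (W I ti A \<bullet> (W A ti I \<bullet> r))"
proof -
  fix r
  have "W I ti A \<bullet> (W A ti I \<bullet> (W I ti A \<bullet> r)) = W I ti A \<bullet> (W A ti I \<bullet> (W I ti A \<bullet> (W A t I \<bullet> (W I t A \<bullet> (W A t I \<bullet>
      (W A ti I \<bullet> (W I ti A \<bullet> (W A ti I \<bullet> r))))))))" by (simp add: r_tti)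
  also have "\<dots> = W I ti A \<bullet> (W A ti I \<bullet> (W I ti A \<bullet> (W I t A \<bullet> (W A t I \<bullet> (W I t A \<bullet>
      (W A ti I \<bullet> (W I ti A \<bullet> (W A ti I \<bullet> r))))))))" by (simp add: YB)
  also have "\<dots> = W A ti I \<bullet> (W I ti A \<bullet> (W A ti I \<bullet> r))" by (simp add: r_tit)
  finally show "?thesis r" .
qed

lemma eti1: "\<And>r. W I e A \<bullet> (W I ti I \<bullet> r) = W A e I \<bullet> r"
proof -
  fix r
  have "W A e I \<bullet> r = W A e I \<bullet> (W I t I \<bullet> (W I ti I \<bullet> r))" by (simp add: r_tti)
  also have "\<dots> = W I e A \<bullet> (W I ti I \<bullet> r)" by (simp add: r_Ze)
  finally show "?thesis r" by simp
qed

lemma eti2: "\<And>r. W A e I \<bullet> (W I ti I \<bullet> r) = W I e A \<bullet> r"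
proof -
  fix r
  have "W I e A \<bullet> r = W I e A \<bullet> (W I t I \<bullet> (W I ti I \<bullet> r))" by (simp add: r_tti)
  also have "\<dots> = W A e I \<bullet> (W I ti I \<bullet> r)" by (simp add: r_nat[where f=e])
  finally show "?thesis r" by simp
qed

definition "dd = W I ti I \<bullet> W I d I"

sublocale RR: galg C A sg m u dd e
proof unfold_locales
  show "W I dd A \<bullet> W I dd I = W A dd I \<bullet> W I dd I"
    by (rule ctx_eq) (simp_all add: dd_def F1 F2 r_cas YB')
  show "W I e A \<bullet> W I dd I = ID A" by (rule ctx_eq) (simp_all add: dd_def eti1 r_cur)
  show "W A e I \<bullet> W I dd I = ID A" by (rule ctx_eq) (simp_all add: dd_def eti2 r_cul)
  show "\<And>X. X \<in> Ob \<Longrightarrow> W X dd I \<bullet> W I (sg X) I = W I (sg X) A \<bullet> W A (sg X) I \<bullet> W I dd X"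
    subgoal for X by (rule ctx_eq) (simp_all add: dd_def r_Zd ti_lax) done
qed (auto simp: dd_def sg_mon sg_nat ax_as ax_ul ax_ur ax_Zm ax_Ze intro: ax_Zu)

lemma Hr1_eq: "W I m A \<bullet> W A t I \<bullet> W I d A = W I t I \<bullet> RR.K (ID A) I"
  unfolding RR.K_def unfolding dd_def
  by (rule ctx_eq) (simp_all add: r_nat'[where f=m] sg_mon[of A A] r_tti)

end

context balg begin
lemma sg_iso: assumes X: "X \<in> Ob" and i: "isoT (W A (sg X) I)" shows "isoT (W I (sg X) I)"
proof -
  obtain K where K: "Ar K" "dm K = A \<otimes> (X \<otimes> A)" "cd K = A \<otimes> (A \<otimes> X)" "K \<bullet> W A (sg X) I = ID (A \<otimes> (A \<otimes> X))"
     "W A (sg X) I \<bullet> K = ID (A \<otimes> (X \<otimes> A))"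
    using i X unfolding isoT_def by auto
  have K1: "\<And>r. K \<bullet> (W A (sg X) I \<bullet> r) = ID (A \<otimes> (A \<otimes> X)) \<bullet> r" subgoal for r using ctxR[OF K(4), of r] by simp done
  have K2: "\<And>r. W A (sg X) I \<bullet> (K \<bullet> r) = ID (A \<otimes> (X \<otimes> A)) \<bullet> r" subgoal for r using ctxR[OF K(5), of r] by simp done
  let ?T = "W I e (A \<otimes> X) \<bullet> K \<bullet> W I u (X \<otimes> A)"
  have 1: "?T \<bullet> W I (sg X) I = ID (A \<otimes> X)"
    by (rule ctx_eq) (use X K in \<open>simp_all add: swL[where f=u and g="sg X" and M=I] K1 r_eu\<close>)
  have 2: "W I (sg X) I \<bullet> ?T = ID (X \<otimes> A)"
    by (rule ctx_eq) (use X K in \<open>simp_all add: swR[where f=e and g="sg X" and M=I] K2 r_eu\<close>)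
  show ?thesis unfolding isoT_def using 1 2 X K by (intro conjI exI[of _ ?T]) auto
qed
end



locale rawb = smcl C for C :: "('o,'m) smc" +
  fixes A :: 'o and s :: "'o \<Rightarrow> 'm" and mu un cm cu :: 'm
  assumes LCB: "lax_central_bialgebra C A s mu un cm cu"
begin

definition "gm = mk (A \<otimes> A) mu A"
definition "gu = mk I un A"
definition "gd = mk A cm (A \<otimes> A)"
definition "ge = mk A cu I"
definition "gs X = mk (A \<otimes> X) (s X) (X \<otimes> A)"

lemma LHB: "lax_half_braiding C A s" using LCB unfolding lax_central_bialgebra_def by auto
lemma A_ob[simp]: "A \<in> Ob" using LHB unfolding lax_half_braiding_def by auto
lemma s_hom: "X \<in> Ob \<Longrightarrow> s X \<in> Hom C (A \<otimes> X) (X \<otimes> A)" using LHB unfolding lax_half_braiding_def by auto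
lemma s_nat: "X \<in> Ob \<Longrightarrow> Y \<in> Ob \<Longrightarrow> f \<in> Hom C X Y \<Longrightarrow> cmp C (tarr C f (idm C A)) (s X) = cmp C (s Y) (tarr C (idm C A) f)"
  using LHB unfolding lax_half_braiding_def by auto
lemma s_mon: "Y \<in> Ob \<Longrightarrow> Z \<in> Ob \<Longrightarrow> s (Y \<otimes> Z) = cmp C (tarr C (idm C Y) (s Z)) (tarr C (s Y) (idm C Z))"
  using LHB unfolding lax_half_braiding_def by auto
lemma s_unit: "s I = idm C A" using LHB unfolding lax_half_braiding_def by auto

lemma mu_hom: "mu \<in> Hom C (A \<otimes> A) A" and mu_lax: "X \<in> Ob \<Longrightarrow> cmp C (tarr C (idm C X) mu) (cmp C (tarr C (s X) (idm C A)) (tarr C (idm C A) (s X))) = cmp C (s X) (tarr C mu (idm C X))"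
  using LCB unfolding lax_central_bialgebra_def zlax_hom_def zt_hb_def by auto
lemma un_hom: "un \<in> Hom C I A" and un_lax: "X \<in> Ob \<Longrightarrow> cmp C (tarr C (idm C X) un) (idm C X) = cmp C (s X) (tarr C un (idm C X))"
  using LCB unfolding lax_central_bialgebra_def zlax_hom_def zu_hb_def by auto
lemma un_lax': "X \<in> Ob \<Longrightarrow> tarr C (idm C X) un = cmp C (s X) (tarr C un (idm C X))"
proof -
  assume X: "X \<in> Ob"
  have "tarr C (idm C X) un \<in> Hom C (X \<otimes> I) (X \<otimes> A)" using X un_hom by (intro tarr_hom id_hom) auto
  hence "cmp C (tarr C (idm C X) un) (idm C X) = tarr C (idm C X) un" using X cmp_idr[of X "X \<otimes> A"] by simp
  thus ?thesis using un_lax[OF X] by simp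
qed
lemma cm_hom: "cm \<in> Hom C A (A \<otimes> A)" and cm_lax: "X \<in> Ob \<Longrightarrow> cmp C (tarr C (idm C X) cm) (s X) = cmp C (cmp C (tarr C (s X) (idm C A)) (tarr C (idm C A) (s X))) (tarr C cm (idm C X))"
  using LCB unfolding lax_central_bialgebra_def zlax_hom_def zt_hb_def by auto
lemma cm_lax': "X \<in> Ob \<Longrightarrow> cmp C (tarr C (idm C X) cm) (s X) = cmp C (tarr C (s X) (idm C A)) (cmp C (tarr C (idm C A) (s X)) (tarr C cm (idm C X)))"
proof -
  assume X: "X \<in> Ob"
  have h1: "tarr C cm (idm C X) \<in> Hom C (A \<otimes> X) (A \<otimes> (A \<otimes> X))"
    using tarr_hom[of A "A \<otimes> A" X X cm "idm C X"] X cm_hom id_hom[of X] by simp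
  have h2: "tarr C (idm C A) (s X) \<in> Hom C (A \<otimes> (A \<otimes> X)) (A \<otimes> (X \<otimes> A))"
    using tarr_hom[of A A "A \<otimes> X" "X \<otimes> A" "idm C A" "s X"] X s_hom[OF X] id_hom[of A] by simp
  have h3: "tarr C (s X) (idm C A) \<in> Hom C (A \<otimes> (X \<otimes> A)) (X \<otimes> (A \<otimes> A))"
    using tarr_hom[of "A \<otimes> X" "X \<otimes> A" A A "s X" "idm C A"] X s_hom[OF X] id_hom[of A] by simp
  show ?thesis using cm_lax[OF X] cmp_assoc[OF _ _ _ _ h1 h2 h3] X by simp
qed
lemma cu_hom: "cu \<in> Hom C A I" and cu_lax: "X \<in> Ob \<Longrightarrow> cmp C (tarr C (idm C X) cu) (s X) = cmp C (idm C X) (tarr C cu (idm C X))"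
  using LCB unfolding lax_central_bialgebra_def zlax_hom_def zu_hb_def by auto
lemma cu_lax': "X \<in> Ob \<Longrightarrow> cmp C (tarr C (idm C X) cu) (s X) = tarr C cu (idm C X)"
proof -
  assume X: "X \<in> Ob"
  have "tarr C cu (idm C X) \<in> Hom C (A \<otimes> X) X" using tarr_hom[of A I X X cu "idm C X"] X cu_hom id_hom[of X] by simp
  thus ?thesis using cu_lax[OF X] cmp_idl[of "A \<otimes> X" X] X by simp
qed
lemma bi_eqs:
  "cmp C mu (tarr C mu (idm C A)) = cmp C mu (tarr C (idm C A) mu)"
  "cmp C mu (tarr C un (idm C A)) = idm C A"
  "cmp C mu (tarr C (idm C A) un) = idm C A"
  "cmp C (tarr C cm (idm C A)) cm = cmp C (tarr C (idm C A) cm) cm"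
  "cmp C (tarr C cu (idm C A)) cm = idm C A"
  "cmp C (tarr C (idm C A) cu) cm = idm C A"
  "cmp C cm mu = cmp C (tarr C mu mu) (cmp C (tarr C (tarr C (idm C A) (s A)) (idm C A)) (tarr C cm cm))"
  "cmp C cm un = tarr C un un"
  "cmp C cu mu = tarr C cu cu"
  "cmp C cu un = idm C I"
  using LCB unfolding lax_central_bialgebra_def by auto

lemma g_typ[simp]: "Ar gm" "dm gm = A \<otimes> A" "cd gm = A" "mr gm = mu"
  "Ar gu" "dm gu = I" "cd gu = A" "mr gu = un"
  "Ar gd" "dm gd = A" "cd gd = A \<otimes> A" "mr gd = cm"
  "Ar ge" "dm ge = A" "cd ge = I" "mr ge = cu"
  using mu_hom un_hom cm_hom cu_hom by (auto simp: gm_def gu_def gd_def ge_def mk_mr)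
lemma gs_typ[simp]: "X \<in> Ob \<Longrightarrow> Ar (gs X)" "X \<in> Ob \<Longrightarrow> dm (gs X) = A \<otimes> X" "X \<in> Ob \<Longrightarrow> cd (gs X) = X \<otimes> A"
  "X \<in> Ob \<Longrightarrow> mr (gs X) = s X"
  using s_hom by (auto simp: gs_def mk_mr)

lemma mirror: "Ar T1 \<Longrightarrow> Ar T2 \<Longrightarrow> dm T1 = dm T2 \<Longrightarrow> cd T1 = cd T2 \<Longrightarrow> mr T1 = mr T2 \<Longrightarrow> T1 = T2"
  by (rule ar_eqI)

lemmas msimps = mr_cp mr_tn mr_ID

lemma mr_W_gen: "Ar f \<Longrightarrow> L \<in> Ob \<Longrightarrow> R \<in> Ob \<Longrightarrow> mr (W L f R) = tarr C (idm C L) (tarr C (mr f) (idm C R))"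
  by (simp add: mr_W)

sublocale B: balg C A gs gm gu gd ge
proof unfold_locales
  show "gs I = ID A" using s_hom s_unit by (intro ar_eqI) (auto simp: mr_ID)
  show "\<And>Y Z. Y \<in> Ob \<Longrightarrow> Z \<in> Ob \<Longrightarrow> gs (Y \<otimes> Z) = W Y (gs Z) I \<bullet> W I (gs Y) Z"
  proof -
    fix Y Z assume o: "Y \<in> Ob" "Z \<in> Ob"
    have "gs (Y \<otimes> Z) = tn (ID Y) (gs Z) \<bullet> tn (gs Y) (ID Z)"
      using o by (intro mirror) (auto simp: msimps s_mon)
    thus "gs (Y \<otimes> Z) = W Y (gs Z) I \<bullet> W I (gs Y) Z" using o by (simp add: tn_split)
  qed
  show "\<And>f. Ar f \<Longrightarrow> W I f A \<bullet> W I (gs (dm f)) I = W I (gs (cd f)) I \<bullet> W A f I"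
  proof -
    fix f assume f: "Ar f"
    have "tn f (ID A) \<bullet> gs (dm f) = gs (cd f) \<bullet> tn (ID A) f"
      using f by (intro mirror) (auto simp: msimps s_nat)
    thus "W I f A \<bullet> W I (gs (dm f)) I = W I (gs (cd f)) I \<bullet> W A f I" using f by (simp add: tn_split W_I1)
  qed
  show "W I gm I \<bullet> W I gm A = W I gm I \<bullet> W A gm I"
  proof -
    have "gm \<bullet> tn gm (ID A) = gm \<bullet> tn (ID A) gm" by (intro mirror) (auto simp: msimps bi_eqs)
    thus ?thesis by (simp add: tn_split W_I1)
  qed
  show "W I gm I \<bullet> W I gu A = ID A"
  proof -
    have "gm \<bullet> tn gu (ID A) = ID A" by (intro mirror) (auto simp: msimps bi_eqs)
    thus ?thesis by (simp add: tn_split W_I1)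
  qed
  show "W I gm I \<bullet> W A gu I = ID A"
  proof -
    have "gm \<bullet> tn (ID A) gu = ID A" by (intro mirror) (auto simp: msimps bi_eqs)
    thus ?thesis by (simp add: tn_split W_I1)
  qed
  show "W I gd A \<bullet> W I gd I = W A gd I \<bullet> W I gd I"
  proof -
    have "tn gd (ID A) \<bullet> gd = tn (ID A) gd \<bullet> gd" by (intro mirror) (auto simp: msimps bi_eqs)
    thus ?thesis by (simp add: tn_split W_I1)
  qed
  show "W I ge A \<bullet> W I gd I = ID A"
  proof -
    have "tn ge (ID A) \<bullet> gd = ID A" by (intro mirror) (auto simp: msimps bi_eqs)
    thus ?thesis by (simp add: tn_split W_I1)
  qed
  show "W A ge I \<bullet> W I gd I = ID A"
  proof -
    have "tn (ID A) ge \<bullet> gd = ID A" by (intro mirror) (auto simp: msimps bi_eqs)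
    thus ?thesis by (simp add: tn_split W_I1)
  qed
  show "\<And>X. X \<in> Ob \<Longrightarrow> W X gm I \<bullet> W I (gs X) A \<bullet> W A (gs X) I = W I (gs X) I \<bullet> W I gm X"
  proof -
    fix X assume X: "X \<in> Ob"
    have "tn (ID X) gm \<bullet> (tn (gs X) (ID A) \<bullet> tn (ID A) (gs X)) = gs X \<bullet> tn gm (ID X)"
      using X by (intro mirror) (auto simp: msimps mu_lax)
    thus "W X gm I \<bullet> W I (gs X) A \<bullet> W A (gs X) I = W I (gs X) I \<bullet> W I gm X" using X by (simp add: tn_split W_I1)
  qed
  show "\<And>X. X \<in> Ob \<Longrightarrow> W X gu I = W I (gs X) I \<bullet> W I gu X"
  proof -
    fix X assume X: "X \<in> Ob"
    have "tn (ID X) gu = gs X \<bullet> tn gu (ID X)"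
      using X by (intro mirror) (auto simp: msimps un_lax')
    thus "W X gu I = W I (gs X) I \<bullet> W I gu X" using X by (simp add: tn_split W_I1)
  qed
  show "\<And>X. X \<in> Ob \<Longrightarrow> W X gd I \<bullet> W I (gs X) I = W I (gs X) A \<bullet> W A (gs X) I \<bullet> W I gd X"
  proof -
    fix X assume X: "X \<in> Ob"
    have "tn (ID X) gd \<bullet> gs X = (tn (gs X) (ID A) \<bullet> tn (ID A) (gs X)) \<bullet> tn gd (ID X)"
      using X by (intro mirror) (auto simp: msimps cm_lax')
    thus "W X gd I \<bullet> W I (gs X) I = W I (gs X) A \<bullet> W A (gs X) I \<bullet> W I gd X" using X by (simp add: tn_split W_I1)
  qed
  show "\<And>X. X \<in> Ob \<Longrightarrow> W X ge I \<bullet> W I (gs X) I = W I ge X"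
  proof -
    fix X assume X: "X \<in> Ob"
    have "tn (ID X) ge \<bullet> gs X = tn ge (ID X)"
      using X by (intro mirror) (auto simp: msimps cu_lax')
    thus "W X ge I \<bullet> W I (gs X) I = W I ge X" using X by (simp add: tn_split W_I1)
  qed
  show "W I gd I \<bullet> W I gm I = W I gm A \<bullet> W (A \<otimes> A) gm I \<bullet> W A (gs A) A \<bullet> W I gd (A \<otimes> A) \<bullet> W A gd I"
  proof -
    have "gd \<bullet> gm = tn gm gm \<bullet> (tn (tn (ID A) (gs A)) (ID A) \<bullet> tn gd gd)"
      by (intro mirror) (auto simp: msimps bi_eqs)
    thus ?thesis by (simp add: tn_split W_I1)
  qed
  show "W I gd I \<bullet> W I gu I = W I gu A \<bullet> W I gu I"
  proof -
    have "gd \<bullet> gu = tn gu gu" by (intro mirror) (auto simp: msimps bi_eqs)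
    thus ?thesis by (simp add: tn_split W_I1)
  qed
  show "W I ge I \<bullet> W I gm I = W I ge I \<bullet> W A ge I"
  proof -
    have "ge \<bullet> gm = tn ge ge" by (intro mirror) (auto simp: msimps bi_eqs)
    thus ?thesis by (simp add: tn_split W_I1)
  qed
  show "W I ge I \<bullet> W I gu I = ID I"
  proof -
    have "ge \<bullet> gu = ID I" by (intro mirror) (auto simp: msimps bi_eqs)
    thus ?thesis by (simp add: tn_split W_I1)
  qed
qed auto

lemma mk_mr_eq: "Ar T \<Longrightarrow> mk (dm T) (mr T) (cd T) = T"
  by (rule ar_eqI) (auto simp: mk_mr)
lemma eq_mr: "Ar T1 \<Longrightarrow> Ar T2 \<Longrightarrow> dm T1 = dm T2 \<Longrightarrow> cd T1 = cd T2 \<Longrightarrow> T1 = T2 \<longleftrightarrow> mr T1 = mr T2"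
  using ar_eqI by blast

definition "Hr1 = W I gm A \<bullet> W A (gs A) I \<bullet> W I gd A"
definition "HrX X = W A (gs X) I \<bullet> W I Hr1 X"

abbreviation "TT \<equiv> bm_T C A"
abbreviation "MT \<equiv> bm_mu C mu"
abbreviation "T2 \<equiv> bm_T2 C A s cm"

lemma fl_eq: assumes "X \<in> Ob" "Y \<in> Ob"
  shows "mk (TT (X \<otimes> TT Y)) (fusion_l C TT MT T2 X Y) (TT X \<otimes> TT Y) = W I (B.K (ID A) X) Y"
proof -
  let ?T = "tn (ID (A \<otimes> X)) (tn gm (ID Y)) \<bullet> tn (tn (ID A) (gs X) \<bullet> tn gd (ID X)) (ID (A \<otimes> Y))"
  have a: "Ar ?T" using assms by simp
  have "mk (TT (X \<otimes> TT Y)) (fusion_l C TT MT T2 X Y) (TT X \<otimes> TT Y) = mk (dm ?T) (mr ?T) (cd ?T)"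
    using assms a by (simp add: fusion_l_def bm_T_def bm_mu_def bm_T2_def msimps)
  also have "\<dots> = ?T" using a by (rule mk_mr_eq)
  also have "\<dots> = W I (B.K (ID A) X) Y" using assms by (simp add: B.K_def tn_split)
  finally show ?thesis .
qed

lemma fr_eq: assumes "X \<in> Ob" "Y \<in> Ob"
  shows "mk (TT (TT X \<otimes> Y)) (fusion_r C TT MT T2 X Y) (TT X \<otimes> TT Y) = W I (HrX X) Y"
proof -
  let ?T = "tn (tn gm (ID X)) (ID (A \<otimes> Y)) \<bullet> tn (tn (ID A) (gs (A \<otimes> X)) \<bullet> tn gd (ID (A \<otimes> X))) (ID Y)"
  have a: "Ar ?T" using assms by simp
  have "mk (TT (TT X \<otimes> Y)) (fusion_r C TT MT T2 X Y) (TT X \<otimes> TT Y) = mk (dm ?T) (mr ?T) (cd ?T)"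
    using assms a by (simp add: fusion_r_def bm_T_def bm_mu_def bm_T2_def msimps)
  also have "\<dots> = ?T" using a by (rule mk_mr_eq)
  also have "\<dots> = W I (HrX X) Y"
    by (rule ctx_eq) (use assms in \<open>simp_all add: HrX_def Hr1_def tn_split B.sg_mon swL[where f=gm and g="gs X" and M=I]\<close>)
  finally show ?thesis .
qed

lemma fl_iso: assumes "X \<in> Ob" "Y \<in> Ob"
  shows "iso C (fusion_l C TT MT T2 X Y) (TT (X \<otimes> TT Y)) (TT X \<otimes> TT Y) \<longleftrightarrow> isoT (W I (B.K (ID A) X) Y)"
proof -
  have "iso C (fusion_l C TT MT T2 X Y) (TT (X \<otimes> TT Y)) (TT X \<otimes> TT Y) \<longleftrightarrow> isoT (mk (TT (X \<otimes> TT Y)) (fusion_l C TT MT T2 X Y) (TT X \<otimes> TT Y))"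
    by (rule iso_isoT) (use assms in \<open>simp_all add: bm_T_def\<close>)
  also have "\<dots> \<longleftrightarrow> isoT (W I (B.K (ID A) X) Y)" by (simp only: fl_eq[OF assms])
  finally show ?thesis .
qed

lemma fr_iso: assumes "X \<in> Ob" "Y \<in> Ob"
  shows "iso C (fusion_r C TT MT T2 X Y) (TT (TT X \<otimes> Y)) (TT X \<otimes> TT Y) \<longleftrightarrow> isoT (W I (HrX X) Y)"
proof -
  have "iso C (fusion_r C TT MT T2 X Y) (TT (TT X \<otimes> Y)) (TT X \<otimes> TT Y) \<longleftrightarrow> isoT (mk (TT (TT X \<otimes> Y)) (fusion_r C TT MT T2 X Y) (TT X \<otimes> TT Y))"
    by (rule iso_isoT) (use assms in \<open>simp_all add: bm_T_def\<close>)
  also have "\<dots> \<longleftrightarrow> isoT (W I (HrX X) Y)" by (simp only: fr_eq[OF assms])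
  finally show ?thesis .
qed

lemma isoT_W_I1: "Ok F \<Longrightarrow> isoT (W I F I) \<longleftrightarrow> isoT F" by (simp add: W_I1)

lemma Kid_Ar: "X \<in> Ob \<Longrightarrow> Ar (B.K (ID A) X)" by (simp add: B.K_def)
lemma HrX_Ar: "X \<in> Ob \<Longrightarrow> Ar (HrX X)" by (simp add: HrX_def Hr1_def)

lemma LH_iff: "left_hopf C TT MT T2 \<longleftrightarrow> (\<forall>X\<in>Ob. isoT (B.K (ID A) X))"
proof -
  have "left_hopf C TT MT T2 \<longleftrightarrow> (\<forall>X\<in>Ob. \<forall>Y\<in>Ob. isoT (W I (B.K (ID A) X) Y))"
    unfolding left_hopf_def using fl_iso by simp
  also have "\<dots> \<longleftrightarrow> (\<forall>X\<in>Ob. isoT (B.K (ID A) X))"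
    using isoT_W Kid_Ar by (metis W_I1 Ar_Ok unit_ob)
  finally show ?thesis .
qed

lemma LP_iff: "left_prehopf C TT MT T2 \<longleftrightarrow> isoT B.H1"
proof -
  have "left_prehopf C TT MT T2 \<longleftrightarrow> (\<forall>Y\<in>Ob. isoT (W I (B.K (ID A) I) Y))"
    unfolding left_prehopf_def using fl_iso[of I] by simp
  also have "\<dots> \<longleftrightarrow> isoT (B.K (ID A) I)"
    using isoT_W Kid_Ar by (metis W_I1 Ar_Ok unit_ob)
  finally show ?thesis by (simp add: B.H1_K)
qed

lemma RH_iff: "right_hopf C TT MT T2 \<longleftrightarrow> (\<forall>X\<in>Ob. isoT (HrX X))"
proof -
  have "right_hopf C TT MT T2 \<longleftrightarrow> (\<forall>X\<in>Ob. \<forall>Y\<in>Ob. isoT (W I (HrX X) Y))"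
    unfolding right_hopf_def using fr_iso by simp
  also have "\<dots> \<longleftrightarrow> (\<forall>X\<in>Ob. isoT (HrX X))"
    using isoT_W HrX_Ar by (metis W_I1 Ar_Ok unit_ob)
  finally show ?thesis .
qed

lemma RP_iff: "right_prehopf C TT MT T2 \<longleftrightarrow> (\<forall>X\<in>Ob. isoT (HrX X))"
proof -
  have "right_prehopf C TT MT T2 \<longleftrightarrow> (\<forall>X\<in>Ob. isoT (W I (HrX X) I))"
    unfolding right_prehopf_def using fr_iso[of _ I] by simp
  thus ?thesis using HrX_Ar by (simp add: W_I1)
qed

lemma lax_iff: assumes "Ar S" "dm S = A" "cd S = A" "X \<in> Ob"
  shows "(W X S I \<bullet> W I (gs X) I = W I (gs X) I \<bullet> W I S X) \<longleftrightarrow> cmp C (tarr C (idm C X) (mr S)) (s X) = cmp C (s X) (tarr C (mr S) (idm C X))"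
proof -
  have "(W X S I \<bullet> W I (gs X) I = W I (gs X) I \<bullet> W I S X) \<longleftrightarrow> (tn (ID X) S \<bullet> gs X = gs X \<bullet> tn S (ID X))"
    using assms by (simp add: tn_split W_I1)
  also have "\<dots> \<longleftrightarrow> mr (tn (ID X) S \<bullet> gs X) = mr (gs X \<bullet> tn S (ID X))" using assms by (intro eq_mr) auto
  also have "\<dots> \<longleftrightarrow> cmp C (tarr C (idm C X) (mr S)) (s X) = cmp C (s X) (tarr C (mr S) (idm C X))"
    using assms by (simp add: msimps)
  finally show ?thesis .
qed

lemma convr_iff: assumes "Ar S" "dm S = A" "cd S = A"
  shows "B.conv S (ID A) = B.ue \<longleftrightarrow> cmp C mu (cmp C (tarr C (mr S) (idm C A)) cm) = cmp C un cu"
proof -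
  have "B.conv S (ID A) = B.ue \<longleftrightarrow> gm \<bullet> (tn S (ID A) \<bullet> gd) = gu \<bullet> ge"
    using assms by (simp add: B.conv_def B.ue_def tn_split W_I1)
  also have "\<dots> \<longleftrightarrow> mr (gm \<bullet> (tn S (ID A) \<bullet> gd)) = mr (gu \<bullet> ge)" using assms by (intro eq_mr) auto
  also have "\<dots> \<longleftrightarrow> cmp C mu (cmp C (tarr C (mr S) (idm C A)) cm) = cmp C un cu" using assms by (simp add: msimps)
  finally show ?thesis .
qed

lemma convl_iff: assumes "Ar S" "dm S = A" "cd S = A"
  shows "B.conv (ID A) S = B.ue \<longleftrightarrow> cmp C mu (cmp C (tarr C (idm C A) (mr S)) cm) = cmp C un cu"
proof -
  have "B.conv (ID A) S = B.ue \<longleftrightarrow> gm \<bullet> (tn (ID A) S \<bullet> gd) = gu \<bullet> ge"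
    using assms by (simp add: B.conv_def B.ue_def tn_split W_I1)
  also have "\<dots> \<longleftrightarrow> mr (gm \<bullet> (tn (ID A) S \<bullet> gd)) = mr (gu \<bullet> ge)" using assms by (intro eq_mr) auto
  also have "\<dots> \<longleftrightarrow> cmp C mu (cmp C (tarr C (idm C A) (mr S)) cm) = cmp C un cu" using assms by (simp add: msimps)
  finally show ?thesis .
qed

lemma antip_iff: assumes "Ar S" "dm S = A" "cd S = A"
  shows "B.antip S \<longleftrightarrow> is_antipode C A s mu un cm cu (mr S)"
  using assms ArD_s(3)[of S] unfolding B.antip_def is_antipode_def zlax_hom_def
  by (auto simp: lax_iff convr_iff convl_iff)

lemma ANT_iff: "has_antipode C A s mu un cm cu \<longleftrightarrow> (\<exists>S. B.antip S)"
proof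
  assume "has_antipode C A s mu un cm cu"
  then obtain S0 where S0: "is_antipode C A s mu un cm cu S0" unfolding has_antipode_def by auto
  hence h: "S0 \<in> Hom C A A" unfolding is_antipode_def zlax_hom_def by auto
  have "B.antip (mk A S0 A)" using antip_iff[of "mk A S0 A"] h S0 by (simp add: mk_mr)
  thus "\<exists>S. B.antip S" ..
next
  assume "\<exists>S. B.antip S"
  then obtain S where S: "B.antip S" by auto
  hence "Ar S" "dm S = A" "cd S = A" by (auto simp: B.antip_def)
  thus "has_antipode C A s mu un cm cu" using antip_iff S unfolding has_antipode_def by auto
qed

lemma IHB_iff: "invertible_hb C A s \<longleftrightarrow> (\<forall>X\<in>Ob. isoT (gs X))"
  unfolding invertible_hb_def by (simp add: iso_isoT gs_def)

definition "opT S' ti \<longleftrightarrow> Ar S' \<and> dm S' = A \<and> cd S' = A \<and> (\<forall>X\<in>Ob. W X S' I \<bullet> W I (gs X) I = W I (gs X) I \<bullet> W I S' X)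
  \<and> Ar ti \<and> dm ti = A \<otimes> A \<and> cd ti = A \<otimes> A \<and> W I ti I \<bullet> W I (gs A) I = ID (A \<otimes> A) \<and> W I (gs A) I \<bullet> W I ti I = ID (A \<otimes> A)
  \<and> W I gm I \<bullet> W I ti I \<bullet> W I S' A \<bullet> W I gd I = B.ue \<and> W I gm I \<bullet> W I ti I \<bullet> W A S' I \<bullet> W I gd I = B.ue"

lemma op_raw: assumes "Ar S'" "dm S' = A" "cd S' = A" "Ar ti" "dm ti = A \<otimes> A" "cd ti = A \<otimes> A"
  shows "opT S' ti \<longleftrightarrow> zlax_hom C A s A s (mr S') \<and> inverse_of C (s A) (mr ti) (A \<otimes> A) (A \<otimes> A)
    \<and> cmp C mu (cmp C (mr ti) (cmp C (tarr C (mr S') (idm C A)) cm)) = cmp C un cu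
    \<and> cmp C mu (cmp C (mr ti) (cmp C (tarr C (idm C A) (mr S')) cm)) = cmp C un cu"
proof -
  have 1: "W I ti I \<bullet> W I (gs A) I = ID (A \<otimes> A) \<longleftrightarrow> cmp C (mr ti) (s A) = idm C (A \<otimes> A)"
  proof -
    have "W I ti I \<bullet> W I (gs A) I = ID (A \<otimes> A) \<longleftrightarrow> ti \<bullet> gs A = ID (A \<otimes> A)" using assms by (simp add: W_I1)
    also have "\<dots> \<longleftrightarrow> mr (ti \<bullet> gs A) = mr (ID (A \<otimes> A))" using assms by (intro eq_mr) auto
    finally show ?thesis using assms by (simp add: msimps)
  qed
  have 2: "W I (gs A) I \<bullet> W I ti I = ID (A \<otimes> A) \<longleftrightarrow> cmp C (s A) (mr ti) = idm C (A \<otimes> A)"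
  proof -
    have "W I (gs A) I \<bullet> W I ti I = ID (A \<otimes> A) \<longleftrightarrow> gs A \<bullet> ti = ID (A \<otimes> A)" using assms by (simp add: W_I1)
    also have "\<dots> \<longleftrightarrow> mr (gs A \<bullet> ti) = mr (ID (A \<otimes> A))" using assms by (intro eq_mr) auto
    finally show ?thesis using assms by (simp add: msimps)
  qed
  have 3: "W I gm I \<bullet> W I ti I \<bullet> W I S' A \<bullet> W I gd I = B.ue \<longleftrightarrow> cmp C mu (cmp C (mr ti) (cmp C (tarr C (mr S') (idm C A)) cm)) = cmp C un cu"
  proof -
    have "W I gm I \<bullet> W I ti I \<bullet> W I S' A \<bullet> W I gd I = B.ue \<longleftrightarrow> gm \<bullet> (ti \<bullet> (tn S' (ID A) \<bullet> gd)) = gu \<bullet> ge"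
      using assms by (simp add: W_I1 B.ue_def tn_split)
    also have "\<dots> \<longleftrightarrow> mr (gm \<bullet> (ti \<bullet> (tn S' (ID A) \<bullet> gd))) = mr (gu \<bullet> ge)" using assms by (intro eq_mr) auto
    finally show ?thesis using assms by (simp add: msimps)
  qed
  have 4: "W I gm I \<bullet> W I ti I \<bullet> W A S' I \<bullet> W I gd I = B.ue \<longleftrightarrow> cmp C mu (cmp C (mr ti) (cmp C (tarr C (idm C A) (mr S')) cm)) = cmp C un cu"
  proof -
    have "W I gm I \<bullet> W I ti I \<bullet> W A S' I \<bullet> W I gd I = B.ue \<longleftrightarrow> gm \<bullet> (ti \<bullet> (tn (ID A) S' \<bullet> gd)) = gu \<bullet> ge"
      using assms by (simp add: W_I1 B.ue_def tn_split)
    also have "\<dots> \<longleftrightarrow> mr (gm \<bullet> (ti \<bullet> (tn (ID A) S' \<bullet> gd))) = mr (gu \<bullet> ge)" using assms by (intro eq_mr) auto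
    finally show ?thesis using assms by (simp add: msimps)
  qed
  show ?thesis unfolding opT_def 1 2 3 4 zlax_hom_def inverse_of_def using assms ArD_s(3)[of S'] ArD_s(3)[of ti]
    by (auto simp: lax_iff s_hom)
qed

lemma OP_iff: "has_opantipode C A s mu un cm cu \<longleftrightarrow> (\<exists>S' ti. opT S' ti)"
proof
  assume "has_opantipode C A s mu un cm cu"
  then obtain S0 ti0 where a: "zlax_hom C A s A s S0" "inverse_of C (s A) ti0 (A \<otimes> A) (A \<otimes> A)"
    "cmp C mu (cmp C ti0 (cmp C (tarr C S0 (idm C A)) cm)) = cmp C un cu"
    "cmp C mu (cmp C ti0 (cmp C (tarr C (idm C A) S0) cm)) = cmp C un cu"
    unfolding has_opantipode_def is_opantipode_def by auto
  have h: "S0 \<in> Hom C A A" "ti0 \<in> Hom C (A \<otimes> A) (A \<otimes> A)" using a unfolding zlax_hom_def inverse_of_def by auto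
  have "opT (mk A S0 A) (mk (A \<otimes> A) ti0 (A \<otimes> A))" using op_raw[of "mk A S0 A" "mk (A \<otimes> A) ti0 (A \<otimes> A)"] h a
    by (simp add: mk_mr)
  thus "\<exists>S' ti. opT S' ti" by blast
next
  assume "\<exists>S' ti. opT S' ti"
  then obtain S' ti where o: "opT S' ti" by auto
  hence t: "Ar S'" "dm S' = A" "cd S' = A" "Ar ti" "dm ti = A \<otimes> A" "cd ti = A \<otimes> A" unfolding opT_def by auto
  show "has_opantipode C A s mu un cm cu" using op_raw[OF t] o
    unfolding has_opantipode_def is_opantipode_def by blast
qed

lemma CH_iff: "central_hopf_algebra C A s mu un cm cu \<longleftrightarrow> (\<forall>X\<in>Ob. isoT (gs X)) \<and> (\<exists>S. B.antip S \<and> isoT S)"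
proof -
  have e: "(\<exists>S. is_antipode C A s mu un cm cu S \<and> iso C S A A) \<longleftrightarrow> (\<exists>S. B.antip S \<and> isoT S)"
  proof
    assume "\<exists>S. is_antipode C A s mu un cm cu S \<and> iso C S A A"
    then obtain S0 where S0: "is_antipode C A s mu un cm cu S0" "iso C S0 A A" by auto
    hence h: "S0 \<in> Hom C A A" unfolding is_antipode_def zlax_hom_def by auto
    have "B.antip (mk A S0 A) \<and> isoT (mk A S0 A)" using antip_iff[of "mk A S0 A"] h S0 iso_isoT[of A A S0] by (simp add: mk_mr)
    thus "\<exists>S. B.antip S \<and> isoT S" ..
  next
    assume "\<exists>S. B.antip S \<and> isoT S"
    then obtain S where S: "B.antip S" "isoT S" by auto
    hence t: "Ar S" "dm S = A" "cd S = A" by (auto simp: B.antip_def)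
    have "is_antipode C A s mu un cm cu (mr S)" using antip_iff t S by simp
    moreover have "iso C (mr S) A A" using iso_isoT[of A A "mr S"] mk_mr_eq[OF t(1)] t S by simp
    ultimately show "\<exists>S. is_antipode C A s mu un cm cu S \<and> iso C S A A" by blast
  qed
  show ?thesis unfolding central_hopf_algebra_def e[symmetric] IHB_iff[symmetric] using LCB
    by (auto simp: invertible_hb_def)
qed

lemma binvI: assumes "Ar ti" "dm ti = A \<otimes> A" "cd ti = A \<otimes> A" "W I ti I \<bullet> W I (gs A) I = ID (A \<otimes> A)" "W I (gs A) I \<bullet> W I ti I = ID (A \<otimes> A)"
  shows "binv C A gs gm gu gd ge ti"
  by (rule binv.intro[OF B.balg_axioms], unfold_locales) (use assms in auto)

lemma LP_ANT: "isoT B.H1 \<Longrightarrow> \<exists>S. B.antip S"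
proof -
  assume "isoT B.H1"
  then obtain G where G: "Ar G" "dm G = A \<otimes> A" "cd G = A \<otimes> A" "G \<bullet> B.H1 = ID (A \<otimes> A)" "B.H1 \<bullet> G = ID (A \<otimes> A)"
    unfolding isoT_def by auto
  from B.GL2[OF G] show ?thesis unfolding B.antip_def by blast
qed

lemma ANT_LH: "B.antip S \<Longrightarrow> X \<in> Ob \<Longrightarrow> isoT (B.K (ID A) X)"
proof -
  assume S: "B.antip S" and X: "X \<in> Ob"
  have a: "Ar S" "dm S = A" "cd S = A" "B.conv (ID A) S = B.ue" "B.conv S (ID A) = B.ue" using S by (auto simp: B.antip_def)
  from B.GL1[OF a X] show ?thesis unfolding isoT_def using a X
    by (intro conjI exI[of _ "B.K S X"]) (auto simp: B.K_def)
qed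

lemma HrX_I: "HrX I = Hr1" by (simp add: HrX_def Hr1_def)

lemma R1: assumes "\<forall>X\<in>Ob. isoT (HrX X)" shows "\<forall>X\<in>Ob. isoT (gs X)" "\<exists>S' ti. opT S' ti"
proof -
  have H1i: "isoT Hr1" using assms HrX_I by (metis unit_ob)
  show gi: "\<forall>X\<in>Ob. isoT (gs X)"
  proof
    fix X assume X: "X \<in> Ob"
    have "isoT (W A (gs X) I \<bullet> W I Hr1 X)" using assms X HrX_def by simp
    moreover have "isoT (W I Hr1 X)" using H1i X by (intro isoT_W) auto
    ultimately have "isoT (W A (gs X) I)" using X isoT_cancel[of "W A (gs X) I" "W I Hr1 X"] by (auto simp: Hr1_def)
    hence "isoT (W I (gs X) I)" by (rule B.sg_iso[OF X])
    thus "isoT (gs X)" using X by (simp add: W_I1)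
  qed
  obtain ti where ti: "Ar ti" "dm ti = A \<otimes> A" "cd ti = A \<otimes> A" "ti \<bullet> gs A = ID (A \<otimes> A)" "gs A \<bullet> ti = ID (A \<otimes> A)"
    using gi unfolding isoT_def by (metis A_ob gs_typ(2,3) tob_ob)
  have tiW: "W I ti I \<bullet> W I (gs A) I = ID (A \<otimes> A)" "W I (gs A) I \<bullet> W I ti I = ID (A \<otimes> A)" using ti by (simp_all add: W_I1)
  interpret Bi: binv C A gs gm gu gd ge ti by (rule binvI) (use ti tiW in auto)
  have tiso: "isoT (W I (gs A) I)" using gi by (simp add: W_I1)
  have "isoT (W I (gs A) I \<bullet> Bi.RR.K (ID A) I)" using H1i Bi.Hr1_eq unfolding Hr1_def by simp
  hence "isoT (Bi.RR.K (ID A) I)" using tiso by (rule isoT_cancel2) (unfold Bi.RR.K_def, auto simp: Bi.dd_def)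
  then obtain G where G: "Ar G" "dm G = A \<otimes> A" "cd G = A \<otimes> A" "G \<bullet> Bi.RR.H1 = ID (A \<otimes> A)" "Bi.RR.H1 \<bullet> G = ID (A \<otimes> A)"
    unfolding isoT_def Bi.RR.H1_K by (auto simp: Bi.dd_def)
  obtain S' where S': "Ar S'" "dm S' = A" "cd S' = A" "Bi.RR.conv (ID A) S' = Bi.RR.ue" "Bi.RR.conv S' (ID A) = Bi.RR.ue"
     "\<forall>X\<in>Ob. W X S' I \<bullet> W I (gs X) I = W I (gs X) I \<bullet> W I S' X" using Bi.RR.GL2[OF G] by blast
  have n1: "W I ti I \<bullet> W I S' A = W A S' I \<bullet> W I ti I" using S' by (intro Bi.ti_natX) auto
  have n2: "W I ti I \<bullet> W A S' I = W I S' A \<bullet> W I ti I" using S' by (intro Bi.ti_natM) auto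
  have e1: "W I gm I \<bullet> W I ti I \<bullet> W I S' A \<bullet> W I gd I = B.ue"
  proof -
    have "W I gm I \<bullet> W I ti I \<bullet> W I S' A \<bullet> W I gd I = W I gm I \<bullet> (W I ti I \<bullet> W I S' A) \<bullet> W I gd I" by simp
    also have "\<dots> = Bi.RR.conv (ID A) S'" unfolding n1 Bi.RR.conv_def using S' by (simp add: Bi.dd_def)
    finally show ?thesis using S' by (simp add: Bi.RR.ue_def B.ue_def)
  qed
  have e2: "W I gm I \<bullet> W I ti I \<bullet> W A S' I \<bullet> W I gd I = B.ue"
  proof -
    have "W I gm I \<bullet> W I ti I \<bullet> W A S' I \<bullet> W I gd I = W I gm I \<bullet> (W I ti I \<bullet> W A S' I) \<bullet> W I gd I" by simp
    also have "\<dots> = Bi.RR.conv S' (ID A)" unfolding n2 Bi.RR.conv_def using S' by (simp add: Bi.dd_def)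
    finally show ?thesis using S' by (simp add: Bi.RR.ue_def B.ue_def)
  qed
  show "\<exists>S' ti. opT S' ti" unfolding opT_def using S' ti tiW e1 e2 by blast
qed

lemma R2: assumes gi: "\<forall>X\<in>Ob. isoT (gs X)" and o: "opT S' ti" shows "\<forall>X\<in>Ob. isoT (HrX X)"
proof -
  have S': "Ar S'" "dm S' = A" "cd S' = A" "\<forall>X\<in>Ob. W X S' I \<bullet> W I (gs X) I = W I (gs X) I \<bullet> W I S' X"
    and ti: "Ar ti" "dm ti = A \<otimes> A" "cd ti = A \<otimes> A" "W I ti I \<bullet> W I (gs A) I = ID (A \<otimes> A)" "W I (gs A) I \<bullet> W I ti I = ID (A \<otimes> A)"
    and e: "W I gm I \<bullet> W I ti I \<bullet> W I S' A \<bullet> W I gd I = B.ue" "W I gm I \<bullet> W I ti I \<bullet> W A S' I \<bullet> W I gd I = B.ue"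
    using o unfolding opT_def by auto
  interpret Bi: binv C A gs gm gu gd ge ti by (rule binvI) (use ti in auto)
  have n1: "W I ti I \<bullet> W I S' A = W A S' I \<bullet> W I ti I" using S' by (intro Bi.ti_natX) auto
  have n2: "W I ti I \<bullet> W A S' I = W I S' A \<bullet> W I ti I" using S' by (intro Bi.ti_natM) auto
  have c1: "Bi.RR.conv (ID A) S' = Bi.RR.ue"
  proof -
    have "Bi.RR.conv (ID A) S' = W I gm I \<bullet> (W I ti I \<bullet> W I S' A) \<bullet> W I gd I" unfolding n1 Bi.RR.conv_def using S' by (simp add: Bi.dd_def)
    thus ?thesis using e(1) S' by (simp add: Bi.RR.ue_def B.ue_def)
  qed
  have c2: "Bi.RR.conv S' (ID A) = Bi.RR.ue"
  proof -
    have "Bi.RR.conv S' (ID A) = W I gm I \<bullet> (W I ti I \<bullet> W A S' I) \<bullet> W I gd I" unfolding n2 Bi.RR.conv_def using S' by (simp add: Bi.dd_def)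
    thus ?thesis using e(2) S' by (simp add: Bi.RR.ue_def B.ue_def)
  qed
  have "isoT (Bi.RR.K (ID A) I)" using Bi.RR.GL1[OF S'(1-3) c1 c2 unit_ob] unfolding isoT_def
    by (intro conjI exI[of _ "Bi.RR.K S' I"]) (unfold Bi.RR.K_def, auto simp: Bi.dd_def S')
  moreover have "isoT (W I (gs A) I)" using gi by (simp add: W_I1)
  ultimately have "isoT (W I (gs A) I \<bullet> Bi.RR.K (ID A) I)" by (intro isoT_cp) (unfold Bi.RR.K_def, auto simp: Bi.dd_def)
  hence H1i: "isoT Hr1" using Bi.Hr1_eq unfolding Hr1_def by simp
  show ?thesis
  proof
    fix X assume X: "X \<in> Ob"
    have "isoT (W A (gs X) I)" using gi X by (intro isoT_W) auto
    moreover have "isoT (W I Hr1 X)" using H1i X by (intro isoT_W) auto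
    ultimately show "isoT (HrX X)" unfolding HrX_def using X by (intro isoT_cp) (auto simp: Hr1_def)
  qed
qed

lemma CEN1: assumes S: "B.antip S" and gi: "\<forall>X\<in>Ob. isoT (gs X)" and o: "opT S' ti" shows "isoT S"
proof -
  have S': "Ar S'" "dm S' = A" "cd S' = A"
    and ti: "Ar ti" "dm ti = A \<otimes> A" "cd ti = A \<otimes> A" "W I ti I \<bullet> W I (gs A) I = ID (A \<otimes> A)" "W I (gs A) I \<bullet> W I ti I = ID (A \<otimes> A)"
    and e: "W I gm I \<bullet> W I ti I \<bullet> W I S' A \<bullet> W I gd I = B.ue" "W I gm I \<bullet> W I ti I \<bullet> W A S' I \<bullet> W I gd I = B.ue"
    using o unfolding opT_def by auto
  interpret Bi: binv C A gs gm gu gd ge ti by (rule binvI) (use ti in auto)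
  have "S \<bullet> S' = ID A" "S' \<bullet> S = ID A" using Bi.C1[OF S S' e] by auto
  thus ?thesis unfolding isoT_def using S S' by (intro conjI exI[of _ S']) (auto simp: B.antip_def)
qed

lemma CEN2: assumes S: "B.antip S" "isoT S" and gi: "\<forall>X\<in>Ob. isoT (gs X)" shows "\<exists>S' ti. opT S' ti"
proof -
  obtain ti where ti: "Ar ti" "dm ti = A \<otimes> A" "cd ti = A \<otimes> A" "ti \<bullet> gs A = ID (A \<otimes> A)" "gs A \<bullet> ti = ID (A \<otimes> A)"
    using gi unfolding isoT_def by (metis A_ob gs_typ(2,3) tob_ob)
  have tiW: "W I ti I \<bullet> W I (gs A) I = ID (A \<otimes> A)" "W I (gs A) I \<bullet> W I ti I = ID (A \<otimes> A)" using ti by (simp_all add: W_I1)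
  interpret Bi: binv C A gs gm gu gd ge ti by (rule binvI) (use ti tiW in auto)
  have St: "Ar S" "dm S = A" "cd S = A" using S by (auto simp: B.antip_def)
  obtain Si where Si: "Ar Si" "dm Si = A" "cd Si = A" "Si \<bullet> S = ID A" "S \<bullet> Si = ID A" using S(2) St unfolding isoT_def by auto
  note c = Bi.C2[OF S(1) Si(1-3) Si(5) Si(4)]
  show ?thesis unfolding opT_def using c Si ti tiW by blast
qed

theorem main:
  "(left_hopf C TT MT T2 \<longleftrightarrow> left_prehopf C TT MT T2)
  \<and> (left_prehopf C TT MT T2 \<longleftrightarrow> has_antipode C A s mu un cm cu)
  \<and> (right_hopf C TT MT T2 \<longleftrightarrow> right_prehopf C TT MT T2)
  \<and> (right_prehopf C TT MT T2 \<longleftrightarrow> invertible_hb C A s \<and> has_opantipode C A s mu un cm cu)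
  \<and> (hopf_monad C TT MT T2 \<longleftrightarrow> prehopf_monad C TT MT T2)
  \<and> (prehopf_monad C TT MT T2 \<longleftrightarrow> central_hopf_algebra C A s mu un cm cu)"
proof -
  have a1: "left_hopf C TT MT T2 \<longleftrightarrow> left_prehopf C TT MT T2"
    unfolding LH_iff LP_iff using LP_ANT ANT_LH by (metis B.H1_K unit_ob)
  have a2: "left_prehopf C TT MT T2 \<longleftrightarrow> has_antipode C A s mu un cm cu"
    unfolding LP_iff ANT_iff using LP_ANT ANT_LH by (metis B.H1_K unit_ob)
  have b1: "right_hopf C TT MT T2 \<longleftrightarrow> right_prehopf C TT MT T2" unfolding RH_iff RP_iff ..
  have b2: "right_prehopf C TT MT T2 \<longleftrightarrow> invertible_hb C A s \<and> has_opantipode C A s mu un cm cu"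
    unfolding RP_iff IHB_iff OP_iff using R1 R2 by blast
  have c: "hopf_monad C TT MT T2 \<longleftrightarrow> prehopf_monad C TT MT T2"
    unfolding hopf_monad_def prehopf_monad_def using a1 b1 by blast
  have d: "prehopf_monad C TT MT T2 \<longleftrightarrow> central_hopf_algebra C A s mu un cm cu"
    unfolding prehopf_monad_def CH_iff a2 b2 ANT_iff IHB_iff OP_iff using CEN1 CEN2 by blast
  show ?thesis using a1 a2 b1 b2 c d by blast
qed

end

theorem mainTheorem12:
  fixes C :: "('o, 'm) smc" and A :: 'o and s :: "'o \<Rightarrow> 'm"
    and mu un cm cu :: 'm
  assumes "strict_monoidal_cat C"
    and "lax_central_bialgebra C A s mu un cm cu"
  shows
   "(left_hopf C (bm_T C A) (bm_mu C mu) (bm_T2 C A s cm)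
       \<longleftrightarrow> left_prehopf C (bm_T C A) (bm_mu C mu) (bm_T2 C A s cm))
  \<and> (left_prehopf C (bm_T C A) (bm_mu C mu) (bm_T2 C A s cm)
       \<longleftrightarrow> has_antipode C A s mu un cm cu)
  \<and> (right_hopf C (bm_T C A) (bm_mu C mu) (bm_T2 C A s cm)
       \<longleftrightarrow> right_prehopf C (bm_T C A) (bm_mu C mu) (bm_T2 C A s cm))
  \<and> (right_prehopf C (bm_T C A) (bm_mu C mu) (bm_T2 C A s cm)
       \<longleftrightarrow> invertible_hb C A s \<and> has_opantipode C A s mu un cm cu)
  \<and> (hopf_monad C (bm_T C A) (bm_mu C mu) (bm_T2 C A s cm)
       \<longleftrightarrow> prehopf_monad C (bm_T C A) (bm_mu C mu) (bm_T2 C A s cm))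
  \<and> (prehopf_monad C (bm_T C A) (bm_mu C mu) (bm_T2 C A s cm)
       \<longleftrightarrow> central_hopf_algebra C A s mu un cm cu)"
proof -
  interpret RB: rawb C A s mu un cm cu
    by (intro rawb.intro smcl.intro rawb_axioms.intro) (rule assms)+
  show ?thesis using RB.main by simp
qed

end
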